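(* Let $T'=(m_1,\dots,m_p)$ be a pseudo type vector, let $\mathbb X\subset\mathbb P^2$ be the standard pseudo linear configuration of type $T'$, and let $\Delta T'=(m_1,m_2-m_1,\dots,m_p-m_{p-1})$. Then: (i) $\mathbb X$ can be obtained from the empty scheme by a finite sequence of basic double links; (ii) the first difference of the Hilbert function of $\mathbb X$ is the standard O-sequence associated to $T'$; (iii) assume that between any two zero entries of $\Delta T'$ there is at least one entry $>1$. If $\Delta T'$ ends with a $0$, or ends with a $0$ followed by some number of $1$'s, then the regularity of $\mathbb X$ is $m_p+1$; otherwise the regularity is $m_p$; (iv) if $\Delta T'$ has two zero entries between which there is no entry $>1$, then the regularity of $\mathbb X$ may be arbitrarily larger than $m_p$ (i.e. for every $N$ there are such pseudo type vectors whose standard pseudo linear configuration has regularity $\ge m_p+N$).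
   Context: Work over an infinite field $k$ of characteristic zero, $R=k[x_0,x_1,x_2]$, $\mathbb P^2=\operatorname{Proj}R$. A pseudo type vector is a sequence $(m_1,\dots,m_p)$ of positive integers with $m_1\le\cdots\le m_p$ such that whenever $m_{i-1}=m_i$ we have $m_i<m_{i+1}$. The standard pseudo linear configuration of type $(m_1,\dots,m_p)$ consists, for each $i=1,\dots,p$, of the $m_i$ points $[j:p-i:1]$, $0\le j\le m_i-1$. For a zero-dimensional scheme $\mathbb Y$ with saturated ideal $I_{\mathbb Y}$, $h_{\mathbb Y}(t)=\dim_k(R/I_{\mathbb Y})_t$, $\Delta h(t)=h(t)-h(t-1)$ (with $h(t)=0$ for $t<0$), and the regularity of $\mathbb Y$ is the least $t$ with $\Delta h_{\mathbb Y}(t)=0$ (equivalently $\min\{t:h^1(\mathcal I_{\mathbb Y}(t-1))=0\}$). Standard O-sequence: set $m_0=0$, $m_{p+1}=\infty$. For each $i$: if $m_{i-1}<m_i<m_{i+1}$, let $s_i$ be the sequence with $(s_i)_t=1$ for $0\le t\le m_i-1$ and $0$ otherwise; if $m_{i-1}=m_i<m_{i+1}$, let $(s_i)_0=1$, $(s_i)_t=2$ for $1\le t\le m_i-1$, $(s_i)_{m_i}=1$, and $0$ otherwise; if $m_{i-1}<m_i=m_{i+1}$, $s_i$ is not defined. For a sequence $s$ and $k\ge0$, $s(-k)$ is $s$ shifted right by $k$ places ($s(-k)_t=s_{t-k}$). The standard O-sequence associated to $T'$ is $\sum_i s_i(i-p)$, the sum over those $i$ for which $s_i$ is defined (so $s_i$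 is shifted right by $p-i$). Basic double link: if $\mathbb Y$ is a zero-dimensional subscheme (or empty, with ideal $R$), $F\in I_{\mathbb Y}$ and $G$ are homogeneous forms with $F,G$ a regular sequence, then $G\cdot I_{\mathbb Y}+(F)$ is the saturated ideal of a zero-dimensional scheme, called a basic double link of $\mathbb Y$. *)

theory Defs
  imports Main "HOL.Vector_Spaces" "HOL-Library.Poly_Mapping" "HOL-Library.Product_Plus"
begin

text \<open>A monomial x0^a x1^b x2^c is the exponent triple (a,b,c); a polynomial is a
finitely supported map from exponent triples to coefficients (ring structure:
the convolution product of HOL-Library.Poly_Mapping).\<close>

type_synonym mon3 = "nat \<times> nat \<times> nat"
type_synonym 'a poly3 = "mon3 \<Rightarrow>\<^sub>0 'a"

definition mdeg :: "mon3 \<Rightarrow> nat" where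
  "mdeg m = fst m + fst (snd m) + snd (snd m)"

text \<open>F is a form of degree d (the zero polynomial is a form of every degree).\<close>
definition homog_of_deg :: "nat \<Rightarrow> 'a::zero poly3 \<Rightarrow> bool" where
  "homog_of_deg d F \<longleftrightarrow> (\<forall>m \<in> Poly_Mapping.keys F. mdeg m = d)"

definition homogeneous :: "'a::zero poly3 \<Rightarrow> bool" where
  "homogeneous F \<longleftrightarrow> (\<exists>d. homog_of_deg d F)"

definition Rdeg :: "nat \<Rightarrow> 'a::zero poly3 set" where
  "Rdeg d = {F. homog_of_deg d F}"

definition pscale :: "'a::field \<Rightarrow> 'a poly3 \<Rightarrow> 'a poly3" where
  "pscale c F = Poly_Mapping.map (\<lambda>x. c * x) F"

definition kdim :: "'a::field poly3 set \<Rightarrow> nat" where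
  "kdim V = vector_space.dim pscale V"

text \<open>A point of P^2 given by a representative (a0,a1,a2) of homogeneous coordinates.\<close>
type_synonym 'a pt = "'a \<times> 'a \<times> 'a"

definition mon_val :: "mon3 \<Rightarrow> 'a::comm_semiring_1 pt \<Rightarrow> 'a" where
  "mon_val m P = fst P ^ fst m * fst (snd P) ^ fst (snd m) * snd (snd P) ^ snd (snd m)"

definition eval_comp :: "nat \<Rightarrow> 'a::comm_semiring_1 poly3 \<Rightarrow> 'a pt \<Rightarrow> 'a" where
  "eval_comp d F P = (\<Sum>m \<in> {m \<in> Poly_Mapping.keys F. mdeg m = d}. Poly_Mapping.lookup F m * mon_val m P)"

text \<open>Saturated (homogeneous) ideal of a finite reduced set of points: the
polynomials all of whose homogeneous components vanish at every point.\<close>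
definition ideal_of_points :: "'a::comm_semiring_1 pt set \<Rightarrow> 'a poly3 set" where
  "ideal_of_points X = {F. \<forall>d. \<forall>P \<in> X. eval_comp d F P = 0}"

definition hilb :: "'a::field poly3 set \<Rightarrow> nat \<Rightarrow> nat" where
  "hilb I t = kdim (Rdeg t :: 'a poly3 set) - kdim (I \<inter> Rdeg t)"

definition delta_hilb :: "'a::field poly3 set \<Rightarrow> nat \<Rightarrow> int" where
  "delta_hilb I t = int (hilb I t) - (if t = 0 then 0 else int (hilb I (t - 1)))"

definition regularity :: "'a::field poly3 set \<Rightarrow> nat" where
  "regularity I = (LEAST t. delta_hilb I t = 0)"

definition principal :: "'a::comm_ring_1 poly3 \<Rightarrow> 'a poly3 set" where
  "principal F = {F * H | H. True}"

definition regular_seq2 :: "'a::comm_ring_1 poly3 \<Rightarrow> 'a poly3 \<Rightarrow> bool" where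
  "regular_seq2 F G \<longleftrightarrow>
     (\<forall>H. F * H = 0 \<longrightarrow> H = 0) \<and>
     (\<forall>H. G * H \<in> principal F \<longrightarrow> H \<in> principal F) \<and>
     (1 \<notin> {F * A + G * B | A B. True})"

definition bdl_ideal :: "'a::comm_ring_1 poly3 set \<Rightarrow> 'a poly3 \<Rightarrow> 'a poly3 \<Rightarrow> 'a poly3 set" where
  "bdl_ideal I F G = {G * A + F * B | A B. A \<in> I}"

definition basic_double_link :: "'a::comm_ring_1 poly3 set \<Rightarrow> 'a poly3 set \<Rightarrow> bool" where
  "basic_double_link J I \<longleftrightarrow>
     (\<exists>F G. homogeneous F \<and> homogeneous G \<and> F \<in> I \<and> regular_seq2 F G \<and> J = bdl_ideal I F G)"

text \<open>Obtainable from the empty scheme (ideal R) by finitely many basic double links.\<close>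
definition obtainable_by_bdl :: "'a::comm_ring_1 poly3 set \<Rightarrow> bool" where
  "obtainable_by_bdl I \<longleftrightarrow>
     (\<exists>n Is. Is 0 = UNIV \<and> Is n = I \<and> (\<forall>k<n. basic_double_link (Is (Suc k)) (Is k)))"

text \<open>A list ms = [m_1,...,m_p] (so m_i = ms ! (i-1)), p >= 1.\<close>
definition pseudo_type_vector :: "nat list \<Rightarrow> bool" where
  "pseudo_type_vector ms \<longleftrightarrow> ms \<noteq> [] \<and> (\<forall>x \<in> set ms. 0 < x) \<and> sorted ms \<and>
     (\<forall>i. i + 2 < length ms \<longrightarrow> ms ! i = ms ! (i+1) \<longrightarrow> ms ! (i+1) < ms ! (i+2))"

definition std_config :: "nat list \<Rightarrow> 'a::comm_semiring_1 pt set" where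
  "std_config ms = {(of_nat j, of_nat (length ms - i), 1) | i j.
       1 \<le> i \<and> i \<le> length ms \<and> j < ms ! (i - 1)}"

text \<open>Standard O-sequence. m_i for 1 <= i <= p; m_0 = 0, m_(p+1) = infinity.\<close>
definition mval :: "nat list \<Rightarrow> nat \<Rightarrow> nat" where
  "mval ms i = (if i = 0 then 0 else ms ! (i - 1))"

definition s_seq :: "nat list \<Rightarrow> nat \<Rightarrow> nat \<Rightarrow> int" where
  "s_seq ms i t =
     (let p = length ms; mi = mval ms i; lt_next = (i = p \<or> mi < mval ms (i + 1)) in
      if mval ms (i - 1) < mi \<and> lt_next then (if t < mi then 1 else 0)
      else if mval ms (i - 1) = mi \<and> lt_next then
        (if t = 0 then 1 else if t < mi then 2 else if t = mi then 1 else 0)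
      else 0)"

definition std_O_seq :: "nat list \<Rightarrow> nat \<Rightarrow> int" where
  "std_O_seq ms t = (\<Sum>i = 1..length ms.
      if length ms - i \<le> t then s_seq ms i (t - (length ms - i)) else 0)"

definition delta_type :: "nat list \<Rightarrow> nat list" where
  "delta_type ms = map (\<lambda>i. mval ms (i + 1) - mval ms i) [0..<length ms]"

definition zeros_separated :: "nat list \<Rightarrow> bool" where
  "zeros_separated d \<longleftrightarrow> (\<forall>a b. a < b \<and> b < length d \<and> d ! a = 0 \<and> d ! b = 0 \<longrightarrow>
      (\<exists>c. a < c \<and> c < b \<and> 1 < d ! c))"

definition ends_zero_ones :: "nat list \<Rightarrow> bool" where
  "ends_zero_ones d \<longleftrightarrow> (\<exists>k < length d. d ! k = 0 \<and> (\<forall>j. k < j \<and> j < length d \<longrightarrow> d ! j = 1))"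

end

theory Submission
  imports Defs "HOL-Computational_Algebra.Polynomial" "HOL-Library.Product_Lexorder"
begin

instance prod :: ("{ordered_cancel_comm_monoid_add, linorder}", "{ordered_cancel_comm_monoid_add, linorder}") ordered_cancel_comm_monoid_add
  by standard (auto simp: less_eq_prod_def less_prod_def intro: add_strict_left_mono add_left_mono)

definition mon :: "mon3 \<Rightarrow> 'b::comm_semiring_1 \<Rightarrow> 'b \<Rightarrow> 'b \<Rightarrow> 'b" where
  "mon m a b c = a ^ fst m * b ^ fst (snd m) * c ^ snd (snd m)"

definition ev :: "('a::zero \<Rightarrow> 'b::comm_semiring_1) \<Rightarrow> 'b \<Rightarrow> 'b \<Rightarrow> 'b \<Rightarrow> 'a poly3 \<Rightarrow> 'b" where
  "ev \<phi> a b c H = (\<Sum>m\<in>Poly_Mapping.keys H. \<phi> (Poly_Mapping.lookup H m) * mon m a b c)"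

definition rhom :: "('a::comm_semiring_1 \<Rightarrow> 'b::comm_semiring_1) \<Rightarrow> bool" where
  "rhom \<phi> \<longleftrightarrow> \<phi> 0 = 0 \<and> \<phi> 1 = 1 \<and> (\<forall>x y. \<phi> (x + y) = \<phi> x + \<phi> y) \<and> (\<forall>x y. \<phi> (x * y) = \<phi> x * \<phi> y)"

lemma mon_add: "mon (m + n) a b c = mon m a b c * mon n a b c"
  by (simp add: mon_def power_add fst_add snd_add algebra_simps)

lemma mon_zero[simp]: "mon 0 a b c = 1"
  by (simp add: mon_def)

lemma ev_superset:
  assumes "finite S" "Poly_Mapping.keys H \<subseteq> S" "\<phi> 0 = 0"
  shows "ev \<phi> a b c H = (\<Sum>m\<in>S. \<phi> (Poly_Mapping.lookup H m) * mon m a b c)"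
  unfolding ev_def
  by (rule sum.mono_neutral_left) (use assms in \<open>auto simp: in_keys_iff\<close>)

lemma ev_zero[simp]: "ev \<phi> a b c 0 = 0"
  by (simp add: ev_def)

lemma ev_add:
  assumes "rhom \<phi>"
  shows "ev \<phi> a b c (F + G) = ev \<phi> a b c F + ev \<phi> a b c G"
proof -
  let ?S = "Poly_Mapping.keys F \<union> Poly_Mapping.keys G"
  have f: "finite ?S" by simp
  have k: "Poly_Mapping.keys (F + G) \<subseteq> ?S" by (rule keys_add)
  have "ev \<phi> a b c (F + G) = (\<Sum>m\<in>?S. \<phi> (Poly_Mapping.lookup (F+G) m) * mon m a b c)"
    by (rule ev_superset[OF f k]) (use assms in \<open>simp add: rhom_def\<close>)
  also have "\<dots> = (\<Sum>m\<in>?S. \<phi> (Poly_Mapping.lookup F m) * mon m a b c) + (\<Sum>m\<in>?S. \<phi> (Poly_Mapping.lookup G m) * mon m a b c)"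
    using assms by (simp add: lookup_add rhom_def distrib_right sum.distrib)
  also have "\<dots> = ev \<phi> a b c F + ev \<phi> a b c G"
    using assms by (simp add: ev_superset[OF f] rhom_def)
  finally show ?thesis .
qed

lemma ev_single:
  assumes "\<phi> 0 = 0"
  shows "ev \<phi> a b c (Poly_Mapping.single k v) = \<phi> v * mon k a b c"
  using assms by (cases "v = 0") (simp_all add: ev_def)

lemma ev_sum:
  assumes "rhom \<phi>"
  shows "ev \<phi> a b c (\<Sum>i\<in>I. f i) = (\<Sum>i\<in>I. ev \<phi> a b c (f i))"
proof (induction I rule: infinite_finite_induct)
  case (insert x F)
  then show ?case by (simp add: ev_add[OF assms])
qed simp_all

lemma pm_expand: "H = (\<Sum>m\<in>Poly_Mapping.keys H. Poly_Mapping.single m (Poly_Mapping.lookup H m))"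
proof (rule poly_mapping_eqI)
  fix k
  show "Poly_Mapping.lookup H k = Poly_Mapping.lookup (\<Sum>m\<in>Poly_Mapping.keys H. Poly_Mapping.single m (Poly_Mapping.lookup H m)) k"
    by (simp add: lookup_sum lookup_single when_def in_keys_iff)
qed

lemma ev_mult:
  assumes "rhom \<phi>"
  shows "ev \<phi> a b c (F * G) = ev \<phi> a b c F * ev \<phi> a b c G"
proof -
  have p0: "\<phi> 0 = 0" using assms by (simp add: rhom_def)
  have pm: "\<phi> (x * y) = \<phi> x * \<phi> y" for x y using assms by (simp add: rhom_def)
  let ?KF = "Poly_Mapping.keys F" and ?KG = "Poly_Mapping.keys G"
  have "F * G = (\<Sum>m\<in>?KF. Poly_Mapping.single m (Poly_Mapping.lookup F m)) * (\<Sum>n\<in>?KG. Poly_Mapping.single n (Poly_Mapping.lookup G n))"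
    using pm_expand[of F] pm_expand[of G] by simp
  also have "\<dots> = (\<Sum>m\<in>?KF. \<Sum>n\<in>?KG. Poly_Mapping.single (m + n) (Poly_Mapping.lookup F m * Poly_Mapping.lookup G n))"
    by (simp add: sum_product mult_single)
  finally have "ev \<phi> a b c (F * G) = (\<Sum>m\<in>?KF. \<Sum>n\<in>?KG. \<phi> (Poly_Mapping.lookup F m) * mon m a b c * (\<phi> (Poly_Mapping.lookup G n) * mon n a b c))"
    by (simp add: ev_sum[OF assms] ev_single p0 pm mon_add mult_ac)
  also have "\<dots> = ev \<phi> a b c F * ev \<phi> a b c G"
    by (simp add: ev_def sum_product)
  finally show ?thesis .
qed

lemma ev_one:
  assumes "rhom \<phi>" shows "ev \<phi> a b c 1 = 1"
proof -
  have "ev \<phi> a b c (Poly_Mapping.single 0 1) = \<phi> 1 * mon 0 a b c"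
    by (rule ev_single) (use assms in \<open>simp add: rhom_def\<close>)
  then show ?thesis using assms by (simp add: rhom_def)
qed

lemma rhom_id: "rhom id"
  by (simp add: rhom_def)

lemma rhom_single: "rhom (Poly_Mapping.single 0 :: 'a::comm_semiring_1 \<Rightarrow> ('c::comm_monoid_add \<Rightarrow>\<^sub>0 'a))"
  by (simp add: rhom_def single_add mult_single)

lemma rhomD: assumes "rhom \<phi>" shows "\<phi> 0 = 0" "\<phi> 1 = 1" "\<phi> (x + y) = \<phi> x + \<phi> y" "\<phi> (x * y) = \<phi> x * \<phi> y"
  using assms by (auto simp: rhom_def)

lemma ev_uminus:
  fixes \<phi> :: "'a::comm_ring_1 \<Rightarrow> 'b::comm_ring_1"
  assumes "rhom \<phi>" shows "ev \<phi> a b c (- F) = - ev \<phi> a b c F"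
  using ev_add[OF assms, of a b c F "- F"] by (simp add: eq_neg_iff_add_eq_0 add.commute)

lemma ev_diff:
  fixes \<phi> :: "'a::comm_ring_1 \<Rightarrow> 'b::comm_ring_1"
  assumes "rhom \<phi>" shows "ev \<phi> a b c (F - G) = ev \<phi> a b c F - ev \<phi> a b c G"
  using ev_add[OF assms, of a b c F "- G"] ev_uminus[OF assms, of a b c G] by simp

lemma ev_power:
  assumes "rhom \<phi>" shows "ev \<phi> a b c (F ^ n) = ev \<phi> a b c F ^ n"
  by (induction n) (simp_all add: ev_mult[OF assms] ev_one[OF assms])

lemma ev_prod:
  assumes "rhom \<phi>" shows "ev \<phi> a b c (\<Prod>i\<in>I. f i) = (\<Prod>i\<in>I. ev \<phi> a b c (f i))"
proof (induction I rule: infinite_finite_induct)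
  case (insert x F)
  then show ?case by (simp add: ev_mult[OF assms])
qed (simp_all add: ev_one[OF assms])

definition Xv :: "'a::{zero,one} poly3" where "Xv = Poly_Mapping.single (1,0,0) 1"
definition Yv :: "'a::{zero,one} poly3" where "Yv = Poly_Mapping.single (0,1,0) 1"
definition Zv :: "'a::{zero,one} poly3" where "Zv = Poly_Mapping.single (0,0,1) 1"
definition cst :: "'a::zero \<Rightarrow> 'a poly3" where "cst v = Poly_Mapping.single 0 v"

lemma zero_mon3: "(0::mon3) = (0,0,0)" by (simp add: zero_prod_def)

lemma ev_Xv[simp]: "rhom \<phi> \<Longrightarrow> ev \<phi> a b c Xv = a"
  by (simp add: Xv_def ev_single rhomD mon_def)
lemma ev_Yv[simp]: "rhom \<phi> \<Longrightarrow> ev \<phi> a b c Yv = b"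
  by (simp add: Yv_def ev_single rhomD mon_def)
lemma ev_Zv[simp]: "rhom \<phi> \<Longrightarrow> ev \<phi> a b c Zv = c"
  by (simp add: Zv_def ev_single rhomD mon_def)
lemma ev_cst[simp]: "rhom \<phi> \<Longrightarrow> ev \<phi> a b c (cst v) = \<phi> v"
  by (simp add: cst_def ev_single rhomD mon_def)

definition peval :: "'a::comm_ring_1 poly3 \<Rightarrow> 'a pt \<Rightarrow> 'a" where
  "peval H P = ev id (fst P) (fst (snd P)) (snd (snd P)) H"

lemma peval_add[simp]: "peval (F + G) P = peval F P + peval G P"
  by (simp add: peval_def ev_add rhom_id)
lemma peval_diff[simp]: "peval (F - G) P = peval F P - peval G P"
  by (simp add: peval_def ev_diff rhom_id)
lemma peval_uminus[simp]: "peval (- F) P = - peval F P"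
  by (simp add: peval_def ev_uminus rhom_id)
lemma peval_mult[simp]: "peval (F * G) P = peval F P * peval G P"
  by (simp add: peval_def ev_mult rhom_id)
lemma peval_one[simp]: "peval 1 P = 1"
  by (simp add: peval_def ev_one rhom_id)
lemma peval_zero[simp]: "peval 0 P = 0"
  by (simp add: peval_def)
lemma peval_power[simp]: "peval (F ^ n) P = peval F P ^ n"
  by (simp add: peval_def ev_power rhom_id)
lemma peval_prod[simp]: "peval (\<Prod>i\<in>I. f i) P = (\<Prod>i\<in>I. peval (f i) P)"
  by (simp add: peval_def ev_prod rhom_id)
lemma peval_sum[simp]: "peval (\<Sum>i\<in>I. f i) P = (\<Sum>i\<in>I. peval (f i) P)"
  by (simp add: peval_def ev_sum rhom_id)
lemma peval_Xv[simp]: "peval Xv (a,b,c) = a" by (simp add: peval_def rhom_id)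
lemma peval_Yv[simp]: "peval Yv (a,b,c) = b" by (simp add: peval_def rhom_id)
lemma peval_Zv[simp]: "peval Zv (a,b,c) = c" by (simp add: peval_def rhom_id)
lemma peval_cst[simp]: "peval (cst v) P = v" by (simp add: peval_def rhom_id)
lemma peval_of_nat[simp]: "peval (of_nat n) P = of_nat n"
  by (induction n) simp_all

definition subst :: "'a::comm_ring_1 poly3 \<Rightarrow> 'a poly3 \<Rightarrow> 'a poly3 \<Rightarrow> 'a poly3 \<Rightarrow> 'a poly3" where
  "subst A B C H = ev cst A B C H"

lemma rhom_cst: "rhom (cst :: 'a::comm_semiring_1 \<Rightarrow> 'a poly3)"
  unfolding cst_def by (rule rhom_single)

lemma subst_add[simp]: "subst A B C (F + G) = subst A B C F + subst A B C G"
  by (simp add: subst_def ev_add rhom_cst)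
lemma subst_mult[simp]: "subst A B C (F * G) = subst A B C F * subst A B C G"
  by (simp add: subst_def ev_mult rhom_cst)
lemma subst_diff[simp]: "subst A B C (F - G) = subst A B C F - subst A B C G"
  by (simp add: subst_def ev_diff rhom_cst)
lemma subst_prod[simp]: "subst A B C (\<Prod>i\<in>I. f i) = (\<Prod>i\<in>I. subst A B C (f i))"
  by (simp add: subst_def ev_prod rhom_cst)
lemma subst_Xv[simp]: "subst A B C Xv = A" by (simp add: subst_def rhom_cst)
lemma subst_Yv[simp]: "subst A B C Yv = B" by (simp add: subst_def rhom_cst)
lemma subst_Zv[simp]: "subst A B C Zv = C" by (simp add: subst_def rhom_cst)
lemma subst_cst[simp]: "subst A B C (cst v) = cst v" by (simp add: subst_def rhom_cst)

lemma subst_expand: "subst A B C H = (\<Sum>m\<in>Poly_Mapping.keys H. cst (Poly_Mapping.lookup H m) * A ^ fst m * B ^ fst (snd m) * C ^ snd (snd m))"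
  by (simp add: subst_def ev_def mon_def mult_ac)

lemma single_pow: "Poly_Mapping.single (a,b,e) (v::'a::comm_semiring_1) ^ n = Poly_Mapping.single (n*a,n*b,n*e) (v^n)"
proof (induction n)
  case 0
  have "(0::mon3) = (0,0,0)" by (simp add: zero_prod_def)
  then show ?case by (metis mult_zero_left power_0 single_one)
next
  case (Suc n)
  then show ?case by (simp add: mult_single)
qed

lemma mono_eq: "cst v * Xv ^ a * Yv ^ b * Zv ^ e = Poly_Mapping.single (a,b,e) (v::'a::comm_ring_1)"
  by (simp add: cst_def Xv_def Yv_def Zv_def single_pow mult_single)

lemma subst_id: "subst Xv Yv Zv H = H"
proof -
  have "subst Xv Yv Zv H = (\<Sum>m\<in>Poly_Mapping.keys H. Poly_Mapping.single m (Poly_Mapping.lookup H m))"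
    unfolding subst_expand by (rule sum.cong) (auto simp: mono_eq)
  then show ?thesis using pm_expand[of H] by simp
qed

lemma peval_subst: "peval (subst A B C H) P = peval H (peval A P, peval B P, peval C P)"
proof -
  have "peval (subst A B C H) P = (\<Sum>m\<in>Poly_Mapping.keys H. Poly_Mapping.lookup H m * peval A P ^ fst m * peval B P ^ fst (snd m) * peval C P ^ snd (snd m))"
    by (simp add: subst_expand)
  also have "\<dots> = peval H (peval A P, peval B P, peval C P)"
    by (simp add: peval_def ev_def mon_def mult_ac)
  finally show ?thesis .
qed

lemma power_diff_factor: "\<exists>q. (x::'a::comm_ring_1) ^ n - y ^ n = (x - y) * q"
  using power_diff_sumr2[of x n y] by blast

lemma sub_y: "\<exists>Q. H = (Yv - B) * Q + subst Xv B Zv H"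
proof -
  have "\<forall>m::mon3. \<exists>q. Yv ^ fst (snd m) - B ^ fst (snd m) = (Yv - B) * q"
    using power_diff_factor by blast
  then obtain q where q: "\<And>m::mon3. Yv ^ fst (snd m) - B ^ fst (snd m) = (Yv - B) * q m" by metis
  let ?c = "\<lambda>m. cst (Poly_Mapping.lookup H m) * Xv ^ fst m * Zv ^ snd (snd m)"
  have "H - subst Xv B Zv H = subst Xv Yv Zv H - subst Xv B Zv H" by (simp only: subst_id)
  also have "\<dots> = (\<Sum>m\<in>Poly_Mapping.keys H. cst (Poly_Mapping.lookup H m) * Xv ^ fst m * Yv ^ fst (snd m) * Zv ^ snd (snd m)
       - cst (Poly_Mapping.lookup H m) * Xv ^ fst m * B ^ fst (snd m) * Zv ^ snd (snd m))"
    unfolding subst_expand by (rule sum_subtractf[symmetric])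
  also have "\<dots> = (\<Sum>m\<in>Poly_Mapping.keys H. ?c m * (Yv ^ fst (snd m) - B ^ fst (snd m)))"
    by (intro sum.cong refl) (simp add: algebra_simps)
  also have "\<dots> = (Yv - B) * (\<Sum>m\<in>Poly_Mapping.keys H. ?c m * q m)"
    unfolding q by (simp add: sum_distrib_left mult.left_commute)
  finally have "H - subst Xv B Zv H = (Yv - B) * (\<Sum>m\<in>Poly_Mapping.keys H. ?c m * q m)" .
  then have "H = (Yv - B) * (\<Sum>m\<in>Poly_Mapping.keys H. ?c m * q m) + subst Xv B Zv H"
    by (simp only: diff_eq_eq)
  then show ?thesis by blast
qed

lemma sub_x: "\<exists>Q. H = (Xv - A) * Q + subst A Yv Zv H"
proof -
  have "\<forall>m::mon3. \<exists>q. Xv ^ fst m - A ^ fst m = (Xv - A) * q"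
    using power_diff_factor by blast
  then obtain q where q: "\<And>m::mon3. Xv ^ fst m - A ^ fst m = (Xv - A) * q m" by metis
  let ?c = "\<lambda>m. cst (Poly_Mapping.lookup H m) * Yv ^ fst (snd m) * Zv ^ snd (snd m)"
  have "H - subst A Yv Zv H = subst Xv Yv Zv H - subst A Yv Zv H" by (simp only: subst_id)
  also have "\<dots> = (\<Sum>m\<in>Poly_Mapping.keys H. cst (Poly_Mapping.lookup H m) * Xv ^ fst m * Yv ^ fst (snd m) * Zv ^ snd (snd m)
       - cst (Poly_Mapping.lookup H m) * A ^ fst m * Yv ^ fst (snd m) * Zv ^ snd (snd m))"
    unfolding subst_expand by (rule sum_subtractf[symmetric])
  also have "\<dots> = (\<Sum>m\<in>Poly_Mapping.keys H. ?c m * (Xv ^ fst m - A ^ fst m))"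
    by (intro sum.cong refl) (simp add: algebra_simps)
  also have "\<dots> = (Xv - A) * (\<Sum>m\<in>Poly_Mapping.keys H. ?c m * q m)"
    unfolding q by (simp add: sum_distrib_left mult.left_commute)
  finally have "H - subst A Yv Zv H = (Xv - A) * (\<Sum>m\<in>Poly_Mapping.keys H. ?c m * q m)" .
  then have "H = (Xv - A) * (\<Sum>m\<in>Poly_Mapping.keys H. ?c m * q m) + subst A Yv Zv H"
    by (simp only: diff_eq_eq)
  then show ?thesis by blast
qed

lemma vanish_coeffs:
  fixes f :: "'i \<Rightarrow> 'a::field_char_0" and g :: "'i \<Rightarrow> nat"
  assumes S: "finite S" and van: "\<And>l. l \<noteq> 0 \<Longrightarrow> (\<Sum>m\<in>S. f m * l ^ g m) = 0"
  shows "(\<Sum>m\<in>{m\<in>S. g m = n}. f m) = 0"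
proof -
  define p where "p = (\<Sum>m\<in>S. monom (f m) (g m))"
  have pv: "poly p l = (\<Sum>m\<in>S. f m * l ^ g m)" for l
    by (simp add: p_def poly_sum poly_monom)
  have "p = 0"
  proof (rule ccontr)
    assume "p \<noteq> 0"
    then have "finite {x. poly p x = 0}" by (rule poly_roots_finite)
    moreover have "UNIV - {0} \<subseteq> {x. poly p x = 0}" using van pv by auto
    ultimately have "finite (UNIV - {0::'a})" by (rule finite_subset[rotated])
    then have "finite (UNIV :: 'a set)" by simp
    then show False using infinite_UNIV_char_0 by blast
  qed
  then have "coeff p n = 0" by simp
  moreover have "coeff p n = (\<Sum>m\<in>S. if g m = n then f m else 0)"
    by (simp add: p_def coeff_sum eq_commute)
  ultimately show ?thesis using S by (simp add: sum.inter_filter)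
qed

definition sc :: "'a::comm_ring_1 \<Rightarrow> 'a pt \<Rightarrow> 'a pt" where
  "sc l P = (l * fst P, l * fst (snd P), l * snd (snd P))"

lemma peval_mon_val: "peval H P = (\<Sum>m\<in>Poly_Mapping.keys H. Poly_Mapping.lookup H m * mon_val m P)"
  by (simp add: peval_def ev_def mon_def mon_val_def)

lemma peval_sc: "peval H (sc l P) = (\<Sum>m\<in>Poly_Mapping.keys H. Poly_Mapping.lookup H m * mon_val m P * l ^ mdeg m)"
  by (simp add: peval_mon_val sc_def mon_val_def mdeg_def power_mult_distrib power_add mult_ac)

lemma ideal_vanish:
  assumes "H \<in> ideal_of_points X" "P \<in> X"
  shows "peval H (sc l P) = 0"
proof -
  let ?K = "Poly_Mapping.keys H"
  let ?F = "\<lambda>m. Poly_Mapping.lookup H m * mon_val m P * l ^ mdeg m"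
  have "peval H (sc l P) = (\<Sum>d\<in>mdeg ` ?K. \<Sum>m\<in>{m\<in>?K. mdeg m = d}. ?F m)"
    unfolding peval_sc by (rule sum.image_gen) simp
  also have "\<dots> = (\<Sum>d\<in>mdeg ` ?K. l ^ d * eval_comp d H P)"
    by (intro sum.cong refl) (auto simp: eval_comp_def sum_distrib_left mult_ac intro!: sum.cong)
  also have "\<dots> = 0" using assms by (simp add: ideal_of_points_def)
  finally show ?thesis .
qed

lemma ideal_iff:
  fixes X :: "'a::field_char_0 pt set"
  shows "H \<in> ideal_of_points X \<longleftrightarrow> (\<forall>P\<in>X. \<forall>l. l \<noteq> 0 \<longrightarrow> peval H (sc l P) = 0)"
proof
  assume "H \<in> ideal_of_points X" then show "\<forall>P\<in>X. \<forall>l. l \<noteq> 0 \<longrightarrow> peval H (sc l P) = 0"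
    using ideal_vanish by blast
next
  assume A: "\<forall>P\<in>X. \<forall>l. l \<noteq> 0 \<longrightarrow> peval H (sc l P) = 0"
  show "H \<in> ideal_of_points X"
    unfolding ideal_of_points_def
  proof (intro CollectI allI ballI)
    fix d P assume "P \<in> X"
    then have "\<And>l. l \<noteq> 0 \<Longrightarrow> (\<Sum>m\<in>Poly_Mapping.keys H. Poly_Mapping.lookup H m * mon_val m P * l ^ mdeg m) = 0"
      using A by (simp add: peval_sc)
    from vanish_coeffs[OF finite_keys this]
    show "eval_comp d H P = 0" by (simp add: eval_comp_def)
  qed
qed

lemma homog_sc:
  assumes "homog_of_deg d H"
  shows "peval H (sc l P) = l ^ d * peval H P"
proof -
  have "peval H (sc l P) = (\<Sum>m\<in>Poly_Mapping.keys H. Poly_Mapping.lookup H m * mon_val m P * l ^ mdeg m)"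
    by (rule peval_sc)
  also have "\<dots> = (\<Sum>m\<in>Poly_Mapping.keys H. Poly_Mapping.lookup H m * mon_val m P * l ^ d)"
    using assms by (intro sum.cong refl) (simp add: homog_of_deg_def)
  also have "\<dots> = l ^ d * peval H P"
    by (simp add: peval_mon_val sum_distrib_left mult_ac)
  finally show ?thesis .
qed

lemma sc_one[simp]: "sc 1 P = P"
  by (simp add: sc_def)

lemma homog_ideal_iff:
  fixes X :: "'a::field_char_0 pt set"
  assumes "homog_of_deg d H"
  shows "H \<in> ideal_of_points X \<longleftrightarrow> (\<forall>P\<in>X. peval H P = 0)"
  unfolding ideal_iff using homog_sc[OF assms]
  by (metis mult_zero_right one_neq_zero sc_one)

lemma zonly_zero:
  fixes K :: "'a::field_char_0 poly3"
  assumes keys: "Poly_Mapping.keys K \<subseteq> {m. fst m = 0 \<and> fst (snd m) = 0}"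
    and van: "\<And>l. l \<noteq> 0 \<Longrightarrow> peval K (0,0,l) = 0"
  shows "K = 0"
proof -
  have "\<And>l. l \<noteq> 0 \<Longrightarrow> (\<Sum>m\<in>Poly_Mapping.keys K. Poly_Mapping.lookup K m * l ^ snd (snd m)) = 0"
  proof -
    fix l :: 'a assume "l \<noteq> 0"
    have "peval K (0,0,l) = (\<Sum>m\<in>Poly_Mapping.keys K. Poly_Mapping.lookup K m * l ^ snd (snd m))"
      unfolding peval_mon_val by (intro sum.cong refl) (use keys in \<open>auto simp: mon_val_def\<close>)
    then show "(\<Sum>m\<in>Poly_Mapping.keys K. Poly_Mapping.lookup K m * l ^ snd (snd m)) = 0"
      using van[OF \<open>l \<noteq> 0\<close>] by simp
  qed
  from vanish_coeffs[OF finite_keys this]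
  have S: "(\<Sum>m\<in>{m\<in>Poly_Mapping.keys K. snd (snd m) = n}. Poly_Mapping.lookup K m) = 0" for n
    by blast
  have "Poly_Mapping.keys K = {}"
  proof (rule ccontr)
    assume "Poly_Mapping.keys K \<noteq> {}"
    then obtain m where m: "m \<in> Poly_Mapping.keys K" by blast
    have eq: "x = m" if "x \<in> Poly_Mapping.keys K" "snd (snd x) = snd (snd m)" for x
    proof -
      have "fst x = 0" "fst (snd x) = 0" "fst m = 0" "fst (snd m) = 0" using keys that m by auto
      then show ?thesis using that(2) by (simp add: prod_eq_iff)
    qed
    have "{m'\<in>Poly_Mapping.keys K. snd (snd m') = snd (snd m)} = {m}"
      using eq m by auto
    with S[of "snd (snd m)"] m show False by (simp add: in_keys_iff)
  qed
  then show ?thesis by simp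
qed

lemma mdeg_add[simp]: "mdeg (m + n) = mdeg m + mdeg n"
  by (simp add: mdeg_def)

lemma homog_mult:
  assumes "homog_of_deg a F" "homog_of_deg b G"
  shows "homog_of_deg (a + b) (F * G)"
  unfolding homog_of_deg_def
proof
  fix m assume "m \<in> Poly_Mapping.keys (F * G)"
  then obtain u v where "m = u + v" "u \<in> Poly_Mapping.keys F" "v \<in> Poly_Mapping.keys G"
    using keys_mult by blast
  then show "mdeg m = a + b" using assms by (simp add: homog_of_deg_def)
qed

lemma homog_add:
  assumes "homog_of_deg a F" "homog_of_deg a G"
  shows "homog_of_deg a (F + G)"
  using assms keys_add[of F G] unfolding homog_of_deg_def by blast

lemma homog_diff:
  assumes "homog_of_deg a (F::'a::ab_group_add poly3)" "homog_of_deg a G"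
  shows "homog_of_deg a (F - G)"
  using assms keys_diff[of F G] unfolding homog_of_deg_def by blast

lemma homog_zero[simp]: "homog_of_deg a 0"
  by (simp add: homog_of_deg_def)

lemma homog_single: "homog_of_deg (mdeg k) (Poly_Mapping.single k v)"
  by (simp add: homog_of_deg_def)

lemma homog_Xv: "homog_of_deg 1 (Xv :: 'a::{zero_neq_one} poly3)"
  using homog_single[of "(1,0,0)" "1::'a"] by (simp add: Xv_def mdeg_def)
lemma homog_Yv: "homog_of_deg 1 (Yv :: 'a::{zero_neq_one} poly3)"
  using homog_single[of "(0,1,0)" "1::'a"] by (simp add: Yv_def mdeg_def)
lemma homog_Zv: "homog_of_deg 1 (Zv :: 'a::{zero_neq_one} poly3)"
  using homog_single[of "(0,0,1)" "1::'a"] by (simp add: Zv_def mdeg_def)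
lemma homog_cst: "homog_of_deg 0 (cst v)"
  using homog_single[of 0 v] by (simp add: cst_def mdeg_def)
lemma homog_one: "homog_of_deg 0 (1::'a::comm_semiring_1 poly3)"
  using homog_cst[of "1::'a"] by (simp add: cst_def)

lemma homog_prod:
  assumes "\<And>i. i \<in> I \<Longrightarrow> homog_of_deg (d i) (f i :: 'a::comm_semiring_1 poly3)"
  shows "homog_of_deg (\<Sum>i\<in>I. d i) (\<Prod>i\<in>I. f i)"
  using assms
proof (induction I rule: infinite_finite_induct)
  case (insert x F)
  then show ?case by (simp add: homog_mult)
qed (simp_all add: homog_one)

lemma homog_power:
  assumes "homog_of_deg d (F :: 'a::comm_semiring_1 poly3)"
  shows "homog_of_deg (n * d) (F ^ n)"
  by (induction n) (simp_all add: homog_one homog_mult assms)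

lemma homog_lin:
  "homog_of_deg 1 (Xv - cst c * Zv :: 'a::comm_ring_1 poly3)"
  "homog_of_deg 1 (Yv - cst c * Zv :: 'a::comm_ring_1 poly3)"
proof -
  have "homog_of_deg 1 (cst c * Zv :: 'a poly3)" using homog_mult[OF homog_cst homog_Zv] by simp
  then show "homog_of_deg 1 (Xv - cst c * Zv :: 'a::comm_ring_1 poly3)"
    "homog_of_deg 1 (Yv - cst c * Zv :: 'a::comm_ring_1 poly3)"
    using homog_diff homog_Xv homog_Yv by blast+
qed

lemma keys_single_sub: "Poly_Mapping.keys (Poly_Mapping.single k v) \<subseteq> {k}"
  by simp

lemma cZ: "cst c * Zv = Poly_Mapping.single (0,0,1) (c::'a::comm_semiring_1)"
  by (simp add: cst_def Zv_def mult_single)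

lemma keys_sum_sub:
  assumes "\<And>i. i \<in> I \<Longrightarrow> Poly_Mapping.keys (f i) \<subseteq> S"
  shows "Poly_Mapping.keys (\<Sum>i\<in>I. f i) \<subseteq> S"
  using keys_sum[of f I] assms by blast

definition yfree :: "mon3 set" where "yfree = {m. fst (snd m) = 0}"
definition zonly :: "mon3 set" where "zonly = {m. fst m = 0 \<and> fst (snd m) = 0}"

lemma keys_K1: "Poly_Mapping.keys (subst Xv (cst c * Zv) Zv (H::'a::comm_ring_1 poly3)) \<subseteq> yfree"
  unfolding subst_expand
proof (rule keys_sum_sub)
  fix m assume "m \<in> Poly_Mapping.keys H"
  have "cst (Poly_Mapping.lookup H m) * Xv ^ fst m * (cst c * Zv) ^ fst (snd m) * Zv ^ snd (snd m)
      = Poly_Mapping.single (fst m, 0, fst (snd m) + snd (snd m)) (Poly_Mapping.lookup H m * c ^ fst (snd m))"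
    by (simp add: cZ cst_def Xv_def Zv_def single_pow mult_single)
  then show "Poly_Mapping.keys (cst (Poly_Mapping.lookup H m) * Xv ^ fst m * (cst c * Zv) ^ fst (snd m) * Zv ^ snd (snd m)) \<subseteq> yfree"
    by (simp add: yfree_def)
qed

lemma keys_K2:
  assumes "Poly_Mapping.keys (K::'a::comm_ring_1 poly3) \<subseteq> yfree"
  shows "Poly_Mapping.keys (subst (cst c * Zv) Yv Zv K) \<subseteq> zonly"
  unfolding subst_expand
proof (rule keys_sum_sub)
  fix m assume "m \<in> Poly_Mapping.keys K"
  then have b: "fst (snd m) = 0" using assms by (auto simp: yfree_def)
  have "cst (Poly_Mapping.lookup K m) * (cst c * Zv) ^ fst m * Yv ^ fst (snd m) * Zv ^ snd (snd m)
      = Poly_Mapping.single (0, 0, fst m + snd (snd m)) (Poly_Mapping.lookup K m * c ^ fst m)"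
    by (simp add: b cZ cst_def Zv_def single_pow mult_single)
  then show "Poly_Mapping.keys (cst (Poly_Mapping.lookup K m) * (cst c * Zv) ^ fst m * Yv ^ fst (snd m) * Zv ^ snd (snd m)) \<subseteq> zonly"
    by (simp add: zonly_def)
qed

lemma keys_K3: "Poly_Mapping.keys (subst Xv 0 Zv (A::'a::comm_ring_1 poly3)) \<subseteq> yfree"
  unfolding subst_expand
proof (rule keys_sum_sub)
  fix m assume "m \<in> Poly_Mapping.keys A"
  show "Poly_Mapping.keys (cst (Poly_Mapping.lookup A m) * Xv ^ fst m * 0 ^ fst (snd m) * Zv ^ snd (snd m)) \<subseteq> yfree"
  proof (cases "fst (snd m) = 0")
    case True
    have "cst (Poly_Mapping.lookup A m) * Xv ^ fst m * 0 ^ fst (snd m) * Zv ^ snd (snd m)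
      = Poly_Mapping.single (fst m, 0, snd (snd m)) (Poly_Mapping.lookup A m)"
      by (simp add: True cst_def Xv_def Zv_def single_pow mult_single)
    then show ?thesis by (simp add: yfree_def)
  next
    case False
    then show ?thesis by (simp add: zero_power)
  qed
qed

lemma subst_K4:
  assumes "Poly_Mapping.keys (K::'a::comm_ring_1 poly3) \<subseteq> yfree"
  shows "subst Xv 0 Zv K = K"
proof -
  have "subst Xv 0 Zv K = (\<Sum>m\<in>Poly_Mapping.keys K. Poly_Mapping.single m (Poly_Mapping.lookup K m))"
    unfolding subst_expand
  proof (intro sum.cong refl)
    fix m assume "m \<in> Poly_Mapping.keys K"
    then have b: "fst (snd m) = 0" using assms by (auto simp: yfree_def)
    have "cst (Poly_Mapping.lookup K m) * Xv ^ fst m * 0 ^ fst (snd m) * Zv ^ snd (snd m)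
      = Poly_Mapping.single (fst m, 0, snd (snd m)) (Poly_Mapping.lookup K m)"
      by (simp add: b cst_def Xv_def Zv_def single_pow mult_single)
    also have "(fst m, 0, snd (snd m)) = m" using b by (simp add: prod_eq_iff)
    finally show "cst (Poly_Mapping.lookup K m) * Xv ^ fst m * 0 ^ fst (snd m) * Zv ^ snd (snd m)
      = Poly_Mapping.single m (Poly_Mapping.lookup K m)" .
  qed
  then show ?thesis using pm_expand[of K] by simp
qed

definition lin :: "nat \<Rightarrow> 'a::comm_ring_1 poly3" where
  "lin j = Xv - cst (of_nat j) * Zv"

lemma peval_lin[simp]: "peval (lin j) (a, b, c) = a - of_nat j * c"
  by (simp add: lin_def)

lemma div_lines:
  fixes K :: "'a::field_char_0 poly3"
  assumes "finite J" "Poly_Mapping.keys K \<subseteq> yfree"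
    "\<And>j l w. j \<in> J \<Longrightarrow> l \<noteq> 0 \<Longrightarrow> peval K (l * of_nat j, w, l) = 0"
  shows "\<exists>B. K = (\<Prod>j\<in>J. lin j) * B"
  using assms
proof (induction J arbitrary: K rule: finite_induct)
  case empty
  then show ?case by auto
next
  case (insert j J)
  let ?A = "cst (of_nat j) * Zv :: 'a poly3"
  obtain Q where Q: "K = (Xv - ?A) * Q + subst ?A Yv Zv K" using sub_x by blast
  have "subst ?A Yv Zv K = 0"
  proof (rule zonly_zero)
    show "Poly_Mapping.keys (subst ?A Yv Zv K) \<subseteq> {m. fst m = 0 \<and> fst (snd m) = 0}"
      using keys_K2[OF insert.prems(1)] by (simp add: zonly_def)
    fix l :: 'a assume "l \<noteq> 0"
    then show "peval (subst ?A Yv Zv K) (0, 0, l) = 0"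
      using insert.prems(2)[of j l 0] by (simp add: peval_subst mult.commute)
  qed
  with Q have KQ: "K = lin j * Q" by (simp add: lin_def)
  define Q' where "Q' = subst Xv 0 Zv Q"
  have "K = subst Xv 0 Zv K" using subst_K4[OF insert.prems(1)] by simp
  also have "\<dots> = lin j * Q'" by (subst KQ) (simp add: Q'_def lin_def)
  finally have KQ': "K = lin j * Q'" .
  have "\<exists>B. Q' = (\<Prod>j\<in>J. lin j) * B"
  proof (rule insert.IH)
    show "Poly_Mapping.keys Q' \<subseteq> yfree" unfolding Q'_def by (rule keys_K3)
    fix j' l w assume j': "j' \<in> J" and l: "l \<noteq> (0::'a)"
    have "0 = peval K (l * of_nat j', w, l)" using insert.prems(2)[of j' l w] j' l by simp
    also have "\<dots> = (l * of_nat j' - of_nat j * l) * peval Q' (l * of_nat j', w, l)"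
      by (subst KQ') simp
    also have "\<dots> = (l * (of_nat j' - of_nat j)) * peval Q' (l * of_nat j', w, l)"
      by (simp add: algebra_simps)
    finally have "(l * (of_nat j' - of_nat j)) * peval Q' (l * of_nat j', w, l) = 0" by simp
    moreover have "of_nat j' - of_nat j \<noteq> (0::'a)" using j' insert.hyps(2) by (metis eq_iff_diff_eq_0 of_nat_eq_iff)
    ultimately show "peval Q' (l * of_nat j', w, l) = 0" using l by (metis mult_eq_0_iff)
  qed
  then obtain B where "Q' = (\<Prod>j\<in>J. lin j) * B" by blast
  then have "K = (\<Prod>j\<in>insert j J. lin j) * B"
    using KQ' insert.hyps by (simp add: mult.assoc)
  then show ?case by blast
qed

definition Fm :: "nat \<Rightarrow> 'a::comm_ring_1 poly3" where
  "Fm m = (\<Prod>j\<in>{..<m}. lin j)"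

definition Gc :: "'a::comm_ring_1 \<Rightarrow> 'a poly3" where
  "Gc c = Yv - cst c * Zv"

lemma peval_Fm: "peval (Fm m) (a, b, z) = (\<Prod>j\<in>{..<m}. a - of_nat j * z)"
  by (simp add: Fm_def)

lemma peval_Fm_zero:
  assumes "j0 < m" shows "peval (Fm m) (of_nat j0 * z, b, z) = 0"
  unfolding peval_Fm using assms by (intro prod_zero) auto

lemma peval_Gc: "peval (Gc c) (a, b, z) = b - c * z"
  by (simp add: Gc_def)

lemma homog_Fm: "homog_of_deg m (Fm m :: 'a::comm_ring_1 poly3)"
proof -
  have "homog_of_deg (\<Sum>j<m. 1) (\<Prod>j<m. lin j :: 'a poly3)"
    by (rule homog_prod) (unfold lin_def, rule homog_lin(1))
  then show ?thesis by (simp add: Fm_def)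
qed

lemma homog_Gc: "homog_of_deg 1 (Gc c)"
  unfolding Gc_def by (rule homog_lin(2))

lemma subst_lin: "subst Xv B Zv (lin j) = lin j"
  by (simp add: lin_def)

lemma subst_Fm: "subst Xv B Zv (Fm m) = Fm m"
  by (simp add: Fm_def subst_lin)

lemma sc_simp: "sc l (a, b, z) = (l * a, l * b, l * z)"
  by (simp add: sc_def)

lemma bdl_step:
  fixes Y :: "'a::field_char_0 pt set" and c :: 'a
  assumes m: "m > 0"
    and Ypts: "\<And>P. P \<in> Y \<Longrightarrow> \<exists>j<m. fst P = of_nat j \<and> fst (snd P) \<noteq> c \<and> snd (snd P) = 1"
  shows "basic_double_link (ideal_of_points (Y \<union> {(of_nat j, c, 1) | j. j < m})) (ideal_of_points Y)"
proof -
  let ?F = "Fm m :: 'a poly3" and ?G = "Gc c :: 'a poly3"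
  let ?L = "{(of_nat j, c, 1) | j. j < m} :: 'a pt set"
  let ?IY = "ideal_of_points Y"
  have FvY: "peval ?F (sc l P) = 0" if P: "P \<in> Y" for P l
  proof -
    obtain j where j: "j < m" "fst P = of_nat j" "snd (snd P) = 1" using Ypts[OF P] by blast
    have "sc l P = (of_nat j * l, l * fst (snd P), l)" using j by (simp add: sc_def mult.commute)
    then show ?thesis using peval_Fm_zero[OF j(1)] by metis
  qed
  have FIY: "?F \<in> ?IY" unfolding ideal_iff using FvY by blast
  have Fnz: "?F \<noteq> 0"
  proof
    assume "?F = 0"
    then have "peval ?F (-1, 0, 1) = 0" by simp
    moreover have "peval ?F (-1, 0, 1) \<noteq> 0"
    proof -
      have "(-1 - of_nat j * 1 :: 'a) \<noteq> 0" for j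
      proof -
        have e: "(-1 - of_nat j * 1 :: 'a) = - of_nat (Suc j)" by simp
        have "of_nat (Suc j) \<noteq> (0::'a)" by (rule of_nat_neq_0)
        then show ?thesis unfolding e by (simp only: neg_equal_0_iff_equal not_False_eq_True)
      qed
      then show ?thesis unfolding peval_Fm by (simp add: prod_zero_iff)
    qed
    ultimately show False by simp
  qed
  have Gnz: "?G \<noteq> 0"
  proof
    assume "?G = 0"
    then have "peval ?G (0, 1, 0) = 0" by simp
    then show False by (simp add: peval_Gc)
  qed
  have reg: "regular_seq2 ?F ?G"
    unfolding regular_seq2_def
  proof (intro conjI allI impI)
    fix H assume "?F * H = 0" then show "H = 0" using Fnz by simp
  next
    fix H assume "?G * H \<in> principal ?F"
    then obtain K where K: "?G * H = ?F * K" by (auto simp: principal_def)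
    let ?s = "subst Xv (cst c * Zv) Zv"
    have sG: "?s ?G = 0" by (simp add: Gc_def)
    have "?F * ?s K = ?s (?F * K)" by (simp add: subst_Fm)
    also have "\<dots> = ?s (?G * H)" by (simp add: K)
    also have "\<dots> = 0" by (simp only: subst_mult sG mult_zero_left)
    finally have sK: "?s K = 0" using Fnz by simp
    obtain Q where "K = (Yv - cst c * Zv) * Q + ?s K" using sub_y by blast
    then have "K = ?G * Q" using sK by (simp add: Gc_def)
    with K have "?G * H = ?G * (?F * Q)" by (simp add: mult_ac)
    then have "H = ?F * Q" using Gnz by simp
    then show "H \<in> principal ?F" by (auto simp: principal_def)
  next
    show "1 \<notin> {?F * A + ?G * B | A B. True}"
    proof
      assume "1 \<in> {?F * A + ?G * B | A B. True}"
      then obtain A B where AB: "1 = ?F * A + ?G * B" by blast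
      have "peval ?F (of_nat 0 * 0, 0, 0) = 0" by (rule peval_Fm_zero[OF m])
      then have "peval ?F (0, 0, 0) = 0" by simp
      moreover have "peval ?G (0, 0, 0) = 0" by (simp add: peval_Gc)
      ultimately have "peval (1::'a poly3) (0,0,0) = 0" by (subst AB) simp
      then show False by simp
    qed
  qed
  have eq: "ideal_of_points (Y \<union> ?L) = bdl_ideal ?IY ?F ?G"
  proof (intro equalityI subsetI)
    fix H assume H: "H \<in> ideal_of_points (Y \<union> ?L)"
    let ?s = "subst Xv (cst c * Zv) Zv"
    obtain Q where Q: "H = (Yv - cst c * Zv) * Q + ?s H" using sub_y by blast
    have "\<exists>B. ?s H = (\<Prod>j\<in>{..<m}. lin j) * B"
    proof (rule div_lines)
      show "finite {..<m}" by simp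
      show "Poly_Mapping.keys (?s H) \<subseteq> yfree" by (rule keys_K1)
      fix j l w assume j: "j \<in> {..<m}" and l: "(l::'a) \<noteq> 0"
      have "(of_nat j, c, 1) \<in> Y \<union> ?L" using j by auto
      from ideal_vanish[OF H this, of l]
      have "peval H (l * of_nat j, l * c, l) = 0" by (simp add: sc_simp)
      then show "peval (?s H) (l * of_nat j, w, l) = 0" by (simp add: peval_subst mult.commute)
    qed
    then obtain B where B: "?s H = ?F * B" by (auto simp: Fm_def)
    have QY: "Q \<in> ?IY"
      unfolding ideal_iff
    proof (intro ballI allI impI)
      fix P and l :: 'a assume P: "P \<in> Y" and l: "l \<noteq> 0"
      have "0 = peval H (sc l P)" using ideal_vanish[OF H, of P l] P by simp
      also have "\<dots> = peval ?G (sc l P) * peval Q (sc l P)"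
        using FvY[OF P, of l] by (subst Q) (simp add: B Gc_def)
      finally have z: "peval ?G (sc l P) * peval Q (sc l P) = 0" by simp
      obtain j where j: "fst (snd P) \<noteq> c" "snd (snd P) = 1" using Ypts[OF P] by blast
      have "peval ?G (sc l P) = l * (fst (snd P) - c)"
        using j by (simp add: sc_def peval_Gc algebra_simps)
      moreover have "l * (fst (snd P) - c) \<noteq> 0" using j l by simp
      ultimately show "peval Q (sc l P) = 0" using z by simp
    qed
    have "H = ?G * Q + ?F * B" using Q B by (simp add: Gc_def)
    then show "H \<in> bdl_ideal ?IY ?F ?G" unfolding bdl_ideal_def using QY by blast
  next
    fix H assume "H \<in> bdl_ideal ?IY ?F ?G"
    then obtain A B where H: "H = ?G * A + ?F * B" and A: "A \<in> ?IY" by (auto simp: bdl_ideal_def)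
    show "H \<in> ideal_of_points (Y \<union> ?L)"
      unfolding ideal_iff
    proof (intro ballI allI impI)
      fix P and l :: 'a assume P: "P \<in> Y \<union> ?L" and l: "l \<noteq> 0"
      show "peval H (sc l P) = 0"
      proof (cases "P \<in> Y")
        case True
        then show ?thesis using ideal_vanish[OF A True] FvY[OF True] by (simp add: H)
      next
        case False
        then obtain j where j: "j < m" "P = (of_nat j, c, 1)" using P by auto
        have "peval ?G (sc l P) = 0" using j by (simp add: sc_simp peval_Gc mult.commute)
        moreover have "peval ?F (sc l P) = 0"
          using j peval_Fm_zero[OF j(1), of l "l * c"] by (simp add: sc_simp mult.commute)
        ultimately show ?thesis by (simp add: H)
      qed
    qed
  qed
  show ?thesis
    unfolding basic_double_link_def homogeneous_def
    using homog_Fm homog_Gc FIY reg eq by blast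
qed

definition Cfg :: "nat list \<Rightarrow> nat \<Rightarrow> 'a::comm_semiring_1 pt set" where
  "Cfg ms k = {(of_nat j, of_nat (length ms - i), 1) | i j. 1 \<le> i \<and> i \<le> k \<and> j < ms ! (i - 1)}"

lemma Cfg_0: "Cfg ms 0 = {}"
  by (auto simp: Cfg_def)

lemma Cfg_full: "Cfg ms (length ms) = std_config ms"
  by (simp add: Cfg_def std_config_def)

lemma Cfg_Suc: "Cfg ms (Suc k) = Cfg ms k \<union> {(of_nat j, of_nat (length ms - Suc k), 1) | j. j < ms ! k}"
proof (intro equalityI subsetI)
  fix x assume "x \<in> Cfg ms (Suc k)"
  then obtain i j where "x = (of_nat j, of_nat (length ms - i), 1)" "1 \<le> i" "i \<le> Suc k" "j < ms ! (i - 1)"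
    by (auto simp: Cfg_def)
  then show "x \<in> Cfg ms k \<union> {(of_nat j, of_nat (length ms - Suc k), 1) | j. j < ms ! k}"
    unfolding Cfg_def by (cases "i = Suc k") auto
next
  fix x assume "x \<in> Cfg ms k \<union> {(of_nat j, of_nat (length ms - Suc k), 1) | j. j < ms ! k}"
  then show "x \<in> Cfg ms (Suc k)"
  proof
    assume "x \<in> Cfg ms k" then show ?thesis unfolding Cfg_def by fastforce
  next
    assume "x \<in> {(of_nat j, of_nat (length ms - Suc k), 1) | j. j < ms ! k}"
    then obtain j where "x = (of_nat j, of_nat (length ms - Suc k), 1)" "j < ms ! k" by blast
    then show ?thesis unfolding Cfg_def by (intro CollectI exI[of _ "Suc k"] exI[of _ j]) simp
  qed
qed

lemma ideal_empty: "ideal_of_points {} = UNIV"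
  by (simp add: ideal_of_points_def)

lemma part_i:
  assumes "pseudo_type_vector ms"
  shows "obtainable_by_bdl (ideal_of_points (std_config ms :: 'a::field_char_0 pt set))"
proof -
  have pos: "\<And>x. x \<in> set ms \<Longrightarrow> 0 < x" and sor: "sorted ms"
    using assms by (auto simp: pseudo_type_vector_def)
  define Is where "Is k = ideal_of_points (Cfg ms k :: 'a pt set)" for k
  have step: "basic_double_link (Is (Suc k)) (Is k)" if k: "k < length ms" for k
  proof -
    have "basic_double_link (ideal_of_points (Cfg ms k \<union> {(of_nat j, of_nat (length ms - Suc k), 1) | j. j < ms ! k}))
        (ideal_of_points (Cfg ms k :: 'a pt set))"
    proof (rule bdl_step)
      show "0 < ms ! k" using pos k by simp
      fix P :: "'a pt" assume "P \<in> Cfg ms k"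
      then obtain i j where P: "P = (of_nat j, of_nat (length ms - i), 1)" "1 \<le> i" "i \<le> k" "j < ms ! (i - 1)"
        by (auto simp: Cfg_def)
      have "ms ! (i - 1) \<le> ms ! k" using sor k P by (intro sorted_nth_mono) auto
      then have "j < ms ! k" using P by simp
      moreover have "length ms - i \<noteq> length ms - Suc k" using P k by simp
      then have "(of_nat (length ms - i) :: 'a) \<noteq> of_nat (length ms - Suc k)" by (metis of_nat_eq_iff)
      ultimately show "\<exists>j<ms ! k. fst P = of_nat j \<and> fst (snd P) \<noteq> of_nat (length ms - Suc k) \<and> snd (snd P) = 1"
        using P(1) by (intro exI[of _ j]) simp
    qed
    then show ?thesis by (simp add: Is_def Cfg_Suc)
  qed
  have "Is 0 = UNIV" unfolding Is_def Cfg_0 by (rule ideal_empty)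
  moreover have "Is (length ms) = ideal_of_points (std_config ms)" by (simp add: Is_def Cfg_full)
  ultimately show ?thesis unfolding obtainable_by_bdl_def using step by blast
qed

lemma pscale_cst: "pscale c F = cst c * F"
  by (simp add: pscale_def cst_def mult_map_scale_conv_mult)

lemma cst_add: "cst (a + b) = cst a + cst b" by (simp add: cst_def single_add)
lemma cst_mult: "cst (a * b) = cst a * (cst b :: 'a::comm_semiring_1 poly3)" by (simp add: cst_def mult_single)
lemma cst_one: "cst 1 = (1 :: 'a::comm_semiring_1 poly3)" by (simp add: cst_def)

interpretation pv: vector_space "pscale :: 'a::field \<Rightarrow> 'a poly3 \<Rightarrow> 'a poly3"
  by unfold_locales (simp_all add: pscale_cst cst_add cst_mult cst_one algebra_simps)

lemma kdim_pv: "kdim V = pv.dim V"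
  by (simp add: kdim_def)

lemma dim_split:
  fixes V K BW T :: "'a::field poly3 set"
  assumes K: "pv.subspace K" "K \<subseteq> V" and BW: "BW \<subseteq> V" "finite BW"
    and T: "finite T" "V \<subseteq> pv.span T"
    and VKW: "V \<subseteq> {k + w | k w. k \<in> K \<and> w \<in> pv.span BW}"
    and ind: "\<And>c. (\<Sum>b\<in>BW. pscale (c b) b) \<in> K \<Longrightarrow> \<forall>b\<in>BW. c b = 0"
  shows "pv.dim V = pv.dim K + card BW"
proof -
  obtain BK where BK: "BK \<subseteq> K" "pv.independent BK" "K \<subseteq> pv.span BK" "card BK = pv.dim K"
    using pv.basis_exists by blast
  have "BK \<subseteq> pv.span T" using BK(1) K(2) T(2) by blast
  then have finBK: "finite BK" using pv.independent_span_bound[OF T(1) BK(2)] by blast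
  have disj: "BK \<inter> BW = {}"
  proof (rule ccontr)
    assume "BK \<inter> BW \<noteq> {}"
    then obtain b where b: "b \<in> BK" "b \<in> BW" by blast
    let ?c = "\<lambda>x. if x = b then 1 else (0::'a)"
    have "(\<Sum>x\<in>BW. pscale (?c x) x) = (\<Sum>x\<in>BW. if x = b then x else 0)"
      by (intro sum.cong refl) (simp add: pscale_cst cst_def)
    also have "\<dots> = b" using BW(2) b(2) by simp
    finally have "(\<Sum>x\<in>BW. pscale (?c x) x) \<in> K" using b BK(1) by auto
    then show False using ind b(2) by fastforce
  qed
  have indep: "pv.independent (BK \<union> BW)"
  proof (rule pv.independent_if_scalars_zero)
    show "finite (BK \<union> BW)" using finBK BW(2) by simp
    fix f x assume sum0: "(\<Sum>x\<in>BK \<union> BW. pscale (f x) x) = 0" and x: "x \<in> BK \<union> BW"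
    have split: "(\<Sum>x\<in>BK \<union> BW. pscale (f x) x) = (\<Sum>x\<in>BK. pscale (f x) x) + (\<Sum>x\<in>BW. pscale (f x) x)"
      using finBK BW(2) disj by (rule sum.union_disjoint)
    have inK: "(\<Sum>x\<in>BK. pscale (f x) x) \<in> K"
      using BK(1) K(1) by (intro pv.subspace_sum pv.subspace_scale) auto
    have "(\<Sum>x\<in>BW. pscale (f x) x) = - (\<Sum>x\<in>BK. pscale (f x) x)"
      using sum0 split by (simp add: eq_neg_iff_add_eq_0 add.commute)
    also have "\<dots> \<in> K" by (rule pv.subspace_neg[OF K(1) inK])
    finally have fW: "\<forall>b\<in>BW. f b = 0" using ind by blast
    then have "(\<Sum>x\<in>BW. pscale (f x) x) = 0" by (simp add: pscale_cst cst_def)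
    then have "(\<Sum>x\<in>BK. pscale (f x) x) = 0" using sum0 split by simp
    then have fK: "\<forall>b\<in>BK. f b = 0"
      using BK(2) finBK unfolding pv.independent_explicit_finite_subsets by blast
    show "f x = 0" using x fK fW by blast
  qed
  have sub: "BK \<union> BW \<subseteq> V" using BK(1) K(2) BW(1) by blast
  have sp: "V \<subseteq> pv.span (BK \<union> BW)"
  proof
    fix v assume "v \<in> V"
    then obtain k w where v: "v = k + w" "k \<in> K" "w \<in> pv.span BW" using VKW by blast
    have "k \<in> pv.span (BK \<union> BW)" using v(2) BK(3) pv.span_mono[of BK "BK \<union> BW"] by blast
    moreover have "w \<in> pv.span (BK \<union> BW)" using v(3) pv.span_mono[of BW "BK \<union> BW"] by blast
    ultimately show "v \<in> pv.span (BK \<union> BW)" using v(1) pv.span_add by blast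
  qed
  have "card (BK \<union> BW) = pv.dim V" by (rule pv.basis_card_eq_dim[OF sub sp indep])
  then show ?thesis using card_Un_disjoint[OF finBK BW(2) disj] BK(4) by simp
qed

definition ffv :: "'a::comm_ring_1 \<Rightarrow> nat \<Rightarrow> 'a" where
  "ffv x i = (\<Prod>k<i. x - of_nat k)"

lemma ffv_Suc: "ffv x (Suc i) = ffv x i * (x - of_nat i)"
  by (simp add: ffv_def)

lemma x_ffv: "x * ffv x i = ffv x (Suc i) + of_nat i * ffv x i"
  by (simp add: ffv_Suc algebra_simps)

lemma pow_ff: "\<exists>c. \<forall>x::'a::comm_ring_1. x ^ a = (\<Sum>i\<le>a. c i * ffv x i)"
proof (induction a)
  case 0
  show ?case by (rule exI[of _ "\<lambda>_. 1"]) (simp add: ffv_def)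
next
  case (Suc a)
  then obtain c where c: "\<And>x::'a. x ^ a = (\<Sum>i\<le>a. c i * ffv x i)" by blast
  define c' where "c' i = (if i = 0 then 0 else c (i - 1)) + (if i \<le> a then of_nat i * c i else 0)" for i
  have "x ^ Suc a = (\<Sum>i\<le>Suc a. c' i * ffv x i)" for x :: 'a
  proof -
    have "x ^ Suc a = (\<Sum>i\<le>a. c i * (x * ffv x i))"
      by (simp add: c sum_distrib_left mult_ac)
    also have "\<dots> = (\<Sum>i\<le>a. c i * ffv x (Suc i)) + (\<Sum>i\<le>a. of_nat i * c i * ffv x i)"
      by (simp add: x_ffv algebra_simps sum.distrib)
    also have "(\<Sum>i\<le>a. c i * ffv x (Suc i)) = (\<Sum>i\<le>Suc a. (if i = 0 then 0 else c (i - 1)) * ffv x i)"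
      by (subst sum.atMost_Suc_shift) simp
    also have "(\<Sum>i\<le>a. of_nat i * c i * ffv x i) = (\<Sum>i\<le>Suc a. (if i \<le> a then of_nat i * c i else 0) * ffv x i)"
      by (simp add: sum.atMost_Suc)
    finally show ?thesis by (simp add: c'_def sum.distrib distrib_right)
  qed
  then show ?case by blast
qed

lemma pow2_ff: "\<exists>C. \<forall>x y::'a::comm_ring_1. x ^ a * y ^ b = (\<Sum>s\<in>{..a}\<times>{..b}. C s * ffv x (fst s) * ffv y (snd s))"
proof -
  obtain c where c: "\<And>x::'a. x ^ a = (\<Sum>i\<le>a. c i * ffv x i)" using pow_ff by blast
  obtain d where d: "\<And>x::'a. x ^ b = (\<Sum>i\<le>b. d i * ffv x i)" using pow_ff by blast
  have "x ^ a * y ^ b = (\<Sum>s\<in>{..a}\<times>{..b}. (c (fst s) * d (snd s)) * ffv x (fst s) * ffv y (snd s))" for x y :: 'a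
    unfolding c d sum_product sum.cartesian_product by (intro sum.cong refl) (auto simp: mult_ac)
  then show ?thesis by (intro exI[of _ "\<lambda>s. c (fst s) * d (snd s)"] allI)
qed

lemma ffv_nat_zero: "ffv (of_nat j :: 'a::field_char_0) i = 0 \<longleftrightarrow> j < i"
  by (auto simp: ffv_def prod_zero_iff)

definition downset :: "(nat \<times> nat) set \<Rightarrow> bool" where
  "downset D \<longleftrightarrow> (\<forall>a b a' b'. (a, b) \<in> D \<longrightarrow> a' \<le> a \<longrightarrow> b' \<le> b \<longrightarrow> (a', b') \<in> D)"

definition ptn :: "nat \<times> nat \<Rightarrow> 'a::comm_semiring_1 pt" where
  "ptn s = (of_nat (fst s), of_nat (snd s), 1)"

definition Bf :: "nat \<Rightarrow> nat \<times> nat \<Rightarrow> 'a::comm_ring_1 poly3" where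
  "Bf t s = (\<Prod>k<fst s. lin k) * (\<Prod>k<snd s. Yv - cst (of_nat k) * Zv) * Zv ^ (t - fst s - snd s)"

lemma peval_Bf: "peval (Bf t s) (ptn p) = ffv (of_nat (fst p)) (fst s) * ffv (of_nat (snd p)) (snd s)"
  by (simp add: Bf_def ptn_def ffv_def)

lemma homog_Bf:
  assumes "fst s + snd s \<le> t"
  shows "homog_of_deg t (Bf t s :: 'a::comm_ring_1 poly3)"
proof -
  have h1: "homog_of_deg (\<Sum>k<fst s. 1) (\<Prod>k<fst s. lin k :: 'a poly3)"
    by (rule homog_prod) (unfold lin_def, rule homog_lin(1))
  have h2: "homog_of_deg (\<Sum>k<snd s. 1) (\<Prod>k<snd s. Yv - cst (of_nat k) * Zv :: 'a poly3)"
    by (rule homog_prod) (rule homog_lin(2))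
  have h3: "homog_of_deg ((t - fst s - snd s) * 1) (Zv ^ (t - fst s - snd s) :: 'a poly3)"
    by (rule homog_power[OF homog_Zv])
  have "homog_of_deg (fst s + snd s + (t - fst s - snd s)) (Bf t s :: 'a poly3)"
    unfolding Bf_def using homog_mult[OF homog_mult[OF h1 h2] h3] by simp
  then show ?thesis using assms by simp
qed

lemma Rdeg_subspace: "pv.subspace (Rdeg t :: 'a::field poly3 set)"
  unfolding pv.subspace_def Rdeg_def
  using homog_add homog_mult[OF homog_cst, where 'a='a]
  by (auto simp: pscale_cst)

lemma single_pscale: "Poly_Mapping.single m v = pscale v (Poly_Mapping.single m (1::'a::field))"
  by (simp add: pscale_cst cst_def mult_single)

lemma Rdeg_span: "Rdeg t \<subseteq> pv.span ((\<lambda>m. Poly_Mapping.single m (1::'a::field)) ` {m. mdeg m = t})"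
proof
  fix H :: "'a poly3" assume H: "H \<in> Rdeg t"
  have "H = (\<Sum>m\<in>Poly_Mapping.keys H. Poly_Mapping.single m (Poly_Mapping.lookup H m))"
    by (rule pm_expand)
  also have "\<dots> = (\<Sum>m\<in>Poly_Mapping.keys H. pscale (Poly_Mapping.lookup H m) (Poly_Mapping.single m 1))"
    by (intro sum.cong refl) (rule single_pscale)
  also have "\<dots> \<in> pv.span ((\<lambda>m. Poly_Mapping.single m (1::'a::field)) ` {m. mdeg m = t})"
    using H by (intro pv.span_sum pv.span_scale pv.span_base) (auto simp: Rdeg_def homog_of_deg_def)
  finally show "H \<in> pv.span ((\<lambda>m. Poly_Mapping.single m (1::'a::field)) ` {m. mdeg m = t})" .
qed

lemma finite_mdeg: "finite {m. mdeg m = t}"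
proof (rule finite_subset)
  show "{m. mdeg m = t} \<subseteq> {..t} \<times> {..t} \<times> {..t}" by (auto simp: mdeg_def)
qed simp

lemma peval_single1: "peval (Poly_Mapping.single (a,b,e) 1) (x,y,z) = x ^ a * y ^ b * z ^ e"
  by (simp add: peval_def ev_single rhom_id mon_def)

lemma hilb_downset:
  fixes D :: "(nat \<times> nat) set"
  assumes finD: "finite D" and dD: "downset D"
  shows "hilb (ideal_of_points (ptn ` D :: 'a::field_char_0 pt set)) t = card {s\<in>D. fst s + snd s \<le> t}"
proof -
  let ?X = "ptn ` D :: 'a pt set"
  let ?V = "Rdeg t :: 'a poly3 set"
  let ?K = "ideal_of_points ?X \<inter> ?V"
  define S where "S = {s\<in>D. fst s + snd s \<le> t}"
  have finS: "finite S" using finD by (simp add: S_def)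
  have Kchar: "H \<in> ?K \<longleftrightarrow> homog_of_deg t H \<and> (\<forall>p\<in>D. peval H (ptn p) = 0)" for H
  proof
    assume "H \<in> ?K"
    then show "homog_of_deg t H \<and> (\<forall>p\<in>D. peval H (ptn p) = 0)"
      using homog_ideal_iff[of t H ?X] by (auto simp: Rdeg_def)
  next
    assume "homog_of_deg t H \<and> (\<forall>p\<in>D. peval H (ptn p) = 0)"
    then show "H \<in> ?K" using homog_ideal_iff[of t H ?X] by (auto simp: Rdeg_def)
  qed
  have Ksub: "pv.subspace ?K"
  proof (rule pv.subspaceI)
    show "0 \<in> ?K" unfolding Kchar by simp
  next
    fix x y assume "x \<in> ?K" "y \<in> ?K"
    then show "x + y \<in> ?K" unfolding Kchar using homog_add by auto
  next
    fix c x assume "x \<in> ?K"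
    then show "pscale c x \<in> ?K" unfolding Kchar pscale_cst using homog_mult[OF homog_cst, of t x c] by auto
  qed
  have BS: "Bf t s \<in> ?V" if "s \<in> S" for s
    using homog_Bf[of s t] that by (auto simp: S_def Rdeg_def)
  have evalsum: "peval (\<Sum>s\<in>S. pscale (c s) (Bf t s)) (ptn p) = (\<Sum>s\<in>S. c s * ffv (of_nat (fst p)) (fst s) * ffv (of_nat (snd p)) (snd s))" for c p
    by (simp add: pscale_cst peval_Bf mult.assoc)
  have indepS: "\<forall>s\<in>S. c s = 0" if inK: "(\<Sum>s\<in>S. pscale (c s) (Bf t s)) \<in> ?K" for c
  proof -
    have van: "(\<Sum>s\<in>S. c s * ffv (of_nat (fst p)) (fst s) * ffv (of_nat (snd p)) (snd s)) = (0::'a)" if "p \<in> D" for p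
      using inK that unfolding Kchar evalsum[symmetric] by blast
    have "\<forall>s\<in>S. fst s + snd s = n \<longrightarrow> c s = 0" for n
    proof (induction n rule: less_induct)
      case (less n)
      show ?case
      proof (intro ballI impI)
        fix s assume s: "s \<in> S" and n: "fst s + snd s = n"
        let ?g = "\<lambda>s'. c s' * ffv (of_nat (fst s) :: 'a) (fst s') * ffv (of_nat (snd s)) (snd s')"
        have others: "?g s' = 0" if s': "s' \<in> S - {s}" for s'
        proof (cases "fst s' \<le> fst s \<and> snd s' \<le> snd s")
          case True
          then have "fst s' + snd s' < n" using s' n by (auto simp: prod_eq_iff)
          then have "c s' = 0" using less.IH s' by blast
          then show ?thesis by simp
        next
          case False
          then show ?thesis by (auto simp: ffv_nat_zero)
        qed
        have "0 = (\<Sum>s'\<in>S. ?g s')" using van[of s] s by (simp add: S_def)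
        also have "\<dots> = ?g s + (\<Sum>s'\<in>S - {s}. ?g s')" using finS s by (rule sum.remove)
        also have "(\<Sum>s'\<in>S - {s}. ?g s') = 0" by (rule sum.neutral) (use others in blast)
        finally have "?g s = 0" by simp
        moreover have "ffv (of_nat (fst s) :: 'a) (fst s) \<noteq> 0" "ffv (of_nat (snd s) :: 'a) (snd s) \<noteq> 0"
          by (simp_all add: ffv_nat_zero)
        ultimately show "c s = 0" by simp
      qed
    qed
    then show ?thesis by blast
  qed
  have inj: "inj_on (Bf t :: nat \<times> nat \<Rightarrow> 'a poly3) S"
  proof
    fix s s' assume s: "s \<in> S" "s' \<in> S" and eq: "(Bf t s :: 'a poly3) = Bf t s'"
    show "s = s'"
    proof (rule ccontr)
      assume ne: "s \<noteq> s'"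
      let ?c = "\<lambda>x. if x = s then 1 else if x = s' then -1 else (0::'a)"
      have "(\<Sum>x\<in>S. pscale (?c x) (Bf t x)) = (\<Sum>x\<in>S. (if x = s then Bf t s else 0) + (if x = s' then - Bf t s' else 0))"
        using ne by (intro sum.cong refl) (auto simp: pscale_cst cst_def single_uminus)
      also have "\<dots> = 0" using finS s eq by (simp add: sum.distrib)
      finally have "(\<Sum>x\<in>S. pscale (?c x) (Bf t x)) \<in> ?K" using pv.subspace_0[OF Ksub] by simp
      then show False using indepS s by fastforce
    qed
  qed
  let ?BW = "(Bf t :: nat \<times> nat \<Rightarrow> 'a poly3) ` S"
  let ?T = "(\<lambda>m. Poly_Mapping.single m (1::'a)) ` {m. mdeg m = t}"
  have WK: "?V \<subseteq> {k + w | k w. k \<in> ?K \<and> w \<in> pv.span ?BW}"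
  proof -
    let ?W = "{k + w | k w. k \<in> ?K \<and> w \<in> pv.span ?BW}"
    have Wsub: "pv.subspace ?W" by (rule pv.subspace_sums[OF Ksub pv.subspace_span])
    have mono: "Poly_Mapping.single m 1 \<in> ?W" if m: "mdeg m = t" for m
    proof -
      obtain a b e where abe: "m = (a, b, e)" by (cases m) auto
      obtain C where C: "\<And>x y::'a. x ^ a * y ^ b = (\<Sum>s\<in>{..a}\<times>{..b}. C s * ffv x (fst s) * ffv y (snd s))"
        using pow2_ff by blast
      define C' where "C' s = (if s \<in> {..a}\<times>{..b} then C s else 0)" for s
      define w where "w = (\<Sum>s\<in>S. pscale (C' s) (Bf t s))"
      have w: "w \<in> pv.span ?BW" unfolding w_def by (intro pv.span_sum pv.span_scale pv.span_base) auto
      have "pv.span ?BW \<subseteq> ?V" using BS by (intro pv.span_minimal Rdeg_subspace) auto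
      then have wV: "homog_of_deg t w" using w by (auto simp: Rdeg_def)
      have mV: "homog_of_deg t (Poly_Mapping.single m (1::'a))" using homog_single[of m "1::'a"] m by simp
      have "Poly_Mapping.single m 1 - w \<in> ?K"
        unfolding Kchar
      proof (intro conjI ballI)
        show "homog_of_deg t (Poly_Mapping.single m 1 - w)" by (rule homog_diff[OF mV wV])
        fix p assume p: "p \<in> D"
        let ?g = "\<lambda>s. ffv (of_nat (fst p) :: 'a) (fst s) * ffv (of_nat (snd p)) (snd s)"
        have "peval w (ptn p) = (\<Sum>s\<in>S. C' s * ?g s)"
          unfolding w_def evalsum by (simp add: mult.assoc)
        also have "\<dots> = (\<Sum>s\<in>S. if s \<in> {..a}\<times>{..b} then C s * ?g s else 0)"
          unfolding C'_def by (intro sum.cong refl) simp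
        also have "\<dots> = (\<Sum>s\<in>S \<inter> ({..a}\<times>{..b}). C s * ?g s)"
          using finS by (rule sum.inter_restrict[symmetric])
        also have "\<dots> = (\<Sum>s\<in>{..a}\<times>{..b}. C s * ?g s)"
        proof (rule sum.mono_neutral_left)
          show "finite ({..a}\<times>{..b})" by simp
          show "S \<inter> ({..a}\<times>{..b}) \<subseteq> {..a}\<times>{..b}" by blast
          show "\<forall>s\<in>{..a}\<times>{..b} - S \<inter> ({..a}\<times>{..b}). C s * ?g s = 0"
          proof
            fix s assume s: "s \<in> {..a}\<times>{..b} - S \<inter> ({..a}\<times>{..b})"
            have "s \<notin> D"
            proof
              assume "s \<in> D"
              moreover have "fst s + snd s \<le> t" using s m abe by (auto simp: mdeg_def)
              ultimately show False using s by (auto simp: S_def)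
            qed
            then have "\<not> (fst s \<le> fst p \<and> snd s \<le> snd p)"
              using dD p unfolding downset_def by (metis prod.collapse)
            then show "C s * ?g s = 0" by (auto simp: ffv_nat_zero)
          qed
        qed
        also have "\<dots> = of_nat (fst p) ^ a * of_nat (snd p) ^ b" by (simp add: C mult.assoc)
        finally have "peval w (ptn p) = of_nat (fst p) ^ a * of_nat (snd p) ^ b" .
        moreover have "peval (Poly_Mapping.single m 1) (ptn p) = of_nat (fst p) ^ a * (of_nat (snd p) :: 'a) ^ b"
          by (simp add: abe ptn_def peval_single1)
        ultimately show "peval (Poly_Mapping.single m 1 - w) (ptn p) = 0" by simp
      qed
      moreover have "Poly_Mapping.single m 1 = (Poly_Mapping.single m 1 - w) + w" by simp
      ultimately show ?thesis using w by blast
    qed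
    show ?thesis
    proof
      fix H assume H: "H \<in> ?V"
      have "H = (\<Sum>m\<in>Poly_Mapping.keys H. Poly_Mapping.single m (Poly_Mapping.lookup H m))"
        by (rule pm_expand)
      also have "\<dots> = (\<Sum>m\<in>Poly_Mapping.keys H. pscale (Poly_Mapping.lookup H m) (Poly_Mapping.single m 1))"
        by (intro sum.cong refl) (rule single_pscale)
      also have "\<dots> \<in> ?W"
        using H mono by (intro pv.subspace_sum[OF Wsub] pv.subspace_scale[OF Wsub]) (auto simp: Rdeg_def homog_of_deg_def)
      finally show "H \<in> ?W" .
    qed
  qed
  have ind: "\<forall>b\<in>?BW. c b = 0" if "(\<Sum>b\<in>?BW. pscale (c b) b) \<in> ?K" for c
  proof -
    have "(\<Sum>b\<in>?BW. pscale (c b) b) = (\<Sum>s\<in>S. pscale (c (Bf t s)) (Bf t s))"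
      by (rule sum.reindex[OF inj, unfolded comp_def])
    then show ?thesis using indepS[of "\<lambda>s. c (Bf t s)"] that by auto
  qed
  have "pv.dim ?V = pv.dim ?K + card ?BW"
  proof (rule dim_split[OF Ksub _ _ _ _ Rdeg_span WK ind])
    show "?K \<subseteq> ?V" by blast
    show "?BW \<subseteq> ?V" using BS by blast
    show "finite ?BW" using finS by simp
    show "finite ?T" using finite_mdeg by simp
  qed
  moreover have "card ?BW = card S" using card_image[OF inj] .
  ultimately show ?thesis by (simp add: hilb_def kdim_pv S_def)
qed

definition Dms :: "nat list \<Rightarrow> (nat \<times> nat) set" where
  "Dms ms = {(j, length ms - i) | i j. 1 \<le> i \<and> i \<le> length ms \<and> j < ms ! (i - 1)}"

lemma setcomp_image: "{f i j | i j. P i j} = (\<lambda>(i, j). f i j) ` {(i, j). P i j}"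
  by auto

lemma std_config_ptn: "std_config ms = ptn ` Dms ms"
  unfolding std_config_def Dms_def setcomp_image image_image
  by (intro image_cong refl) (auto simp: ptn_def)

lemma finite_Dms: "finite (Dms ms)"
proof (rule finite_subset)
  show "Dms ms \<subseteq> {..<sum_list ms} \<times> {..length ms}"
  proof
    fix x assume "x \<in> Dms ms"
    then obtain i j where x: "x = (j, length ms - i)" "1 \<le> i" "i \<le> length ms" "j < ms ! (i - 1)"
      by (auto simp: Dms_def)
    have "ms ! (i - 1) \<le> sum_list ms" using x by (intro elem_le_sum_list) auto
    then show "x \<in> {..<sum_list ms} \<times> {..length ms}" using x by auto
  qed
qed simp

lemma downset_Dms:
  assumes "sorted ms" shows "downset (Dms ms)"
  unfolding downset_def
proof (intro allI impI)
  fix a b a' b' assume ab: "(a, b) \<in> Dms ms" and le: "a' \<le> a" "b' \<le> b"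
  then obtain i where i: "b = length ms - i" "1 \<le> i" "i \<le> length ms" "a < ms ! (i - 1)"
    by (auto simp: Dms_def)
  define i' where "i' = length ms - b'"
  have i': "1 \<le> i'" "i' \<le> length ms" "i \<le> i'" "length ms - i' = b'" using i le by (auto simp: i'_def)
  have "ms ! (i - 1) \<le> ms ! (i' - 1)" using assms i i' by (intro sorted_nth_mono) auto
  then have "a' < ms ! (i' - 1)" using i le by simp
  then show "(a', b') \<in> Dms ms" using i' unfolding Dms_def by (intro CollectI exI[of _ i'] exI[of _ a']) auto
qed

definition rowset :: "nat list \<Rightarrow> nat \<Rightarrow> nat set" where
  "rowset ms t = {i\<in>{1..length ms}. length ms - i \<le> t \<and> t - (length ms - i) < mval ms i}"

lemma card_diag:
  "card {s\<in>Dms ms. fst s + snd s = t} = card (rowset ms t)"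
proof -
  let ?p = "length ms"
  let ?f = "\<lambda>i. (t - (?p - i), ?p - i)"
  have inj: "inj_on ?f (rowset ms t)"
    by (rule inj_onI) (auto simp: rowset_def)
  have "?f ` rowset ms t = {s\<in>Dms ms. fst s + snd s = t}"
  proof (intro equalityI subsetI)
    fix s assume "s \<in> ?f ` rowset ms t"
    then obtain i where i: "i \<in> rowset ms t" "s = ?f i" by blast
    then show "s \<in> {s\<in>Dms ms. fst s + snd s = t}"
      unfolding Dms_def rowset_def mval_def
      by (intro CollectI conjI exI[of _ i] exI[of _ "t - (?p - i)"]) auto
  next
    fix s assume "s \<in> {s\<in>Dms ms. fst s + snd s = t}"
    then obtain i j where s: "s = (j, ?p - i)" "1 \<le> i" "i \<le> ?p" "j < ms ! (i - 1)" "j + (?p - i) = t"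
      by (auto simp: Dms_def)
    then have "i \<in> rowset ms t" by (auto simp: rowset_def mval_def)
    moreover have "s = ?f i" using s by auto
    ultimately show "s \<in> ?f ` rowset ms t" by blast
  qed
  then show ?thesis using card_image[OF inj] by simp
qed

lemma delta_hilb_rowset:
  assumes "sorted ms"
  shows "delta_hilb (ideal_of_points (std_config ms :: 'a::field_char_0 pt set)) t = int (card (rowset ms t))"
proof -
  let ?D = "Dms ms"
  have h: "hilb (ideal_of_points (std_config ms :: 'a pt set)) u = card {s\<in>?D. fst s + snd s \<le> u}" for u
    unfolding std_config_ptn by (rule hilb_downset[OF finite_Dms downset_Dms[OF assms]])
  have fin: "finite {s\<in>?D. P s}" for P using finite_Dms by simp
  show ?thesis
  proof (cases t)
    case 0
    have "{s\<in>?D. fst s + snd s \<le> 0} = {s\<in>?D. fst s + snd s = 0}" by auto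
    then have "hilb (ideal_of_points (std_config ms :: 'a pt set)) 0 = card (rowset ms 0)"
      unfolding h by (simp only: card_diag)
    then show ?thesis using 0 by (simp add: delta_hilb_def)
  next
    case (Suc u)
    have "{s\<in>?D. fst s + snd s \<le> Suc u} = {s\<in>?D. fst s + snd s \<le> u} \<union> {s\<in>?D. fst s + snd s = Suc u}"
      by auto
    then have "card {s\<in>?D. fst s + snd s \<le> Suc u} = card {s\<in>?D. fst s + snd s \<le> u} + card {s\<in>?D. fst s + snd s = Suc u}"
      using fin by (simp add: card_Un_disjoint disjoint_iff)
    then show ?thesis using Suc by (simp add: delta_hilb_def h card_diag)
  qed
qed

lemma mval_mono:
  assumes "sorted ms" "i \<le> i'" "i' \<le> length ms"
  shows "mval ms i \<le> mval ms i'"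
  using assms by (auto simp: mval_def intro: sorted_nth_mono)

lemma mval_pos:
  assumes "\<forall>x\<in>set ms. 0 < x" "1 \<le> i" "i \<le> length ms"
  shows "0 < mval ms i"
  using assms by (auto simp: mval_def)

lemma int_card_filter: "finite A \<Longrightarrow> int (card {i\<in>A. P i}) = (\<Sum>i\<in>A. if P i then 1 else 0)"
  by (simp add: sum.inter_filter[symmetric])

lemma O_seq_rowset:
  assumes ptv: "pseudo_type_vector ms"
  shows "std_O_seq ms t = int (card (rowset ms t))"
proof -
  let ?p = "length ms"
  let ?m = "mval ms"
  have pos: "\<forall>x\<in>set ms. 0 < x" and sor: "sorted ms" and ne: "ms \<noteq> []"
    using ptv by (auto simp: pseudo_type_vector_def)
  have pseudo: "\<And>i. i + 2 < ?p \<Longrightarrow> ms ! i = ms ! (i+1) \<Longrightarrow> ms ! (i+1) < ms ! (i+2)"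
    using ptv by (auto simp: pseudo_type_vector_def)
  have p1: "1 \<le> ?p" using ne by (cases ms) auto
  define row where "row i = (if ?p - i \<le> t \<and> t - (?p - i) < ?m i then 1 else 0 :: int)" for i
  define ln where "ln i = (i = ?p \<or> ?m i < ?m (i + 1))" for i
  define A where "A i = (if ln i then row i else 0)" for i
  define B where "B i = (if 2 \<le> i \<and> ln i \<and> ?m (i - 1) = ?m i then row (i - 1) else 0)" for i
  have contrib: "(if ?p - i \<le> t then s_seq ms i (t - (?p - i)) else 0) = A i + B i"
    if i: "1 \<le> i" "i \<le> ?p" for i
  proof -
    have mpos: "0 < ?m i" using mval_pos[OF pos i] .
    have mle: "?m (i - 1) \<le> ?m i" using mval_mono[OF sor, of "i - 1" i] i by simp
    show ?thesis
    proof (cases "?m (i - 1) < ?m i")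
      case True
      then show ?thesis
        by (auto simp: s_seq_def Let_def A_def B_def row_def ln_def)
    next
      case False
      then have eq: "?m (i - 1) = ?m i" using mle by simp
      have i2: "2 \<le> i"
      proof (rule ccontr)
        assume "\<not> 2 \<le> i" then have "i = 1" using i by simp
        then show False using eq mpos by (simp add: mval_def)
      qed
      have pi: "?p - (i - 1) = Suc (?p - i)" using i i2 by simp
      show ?thesis
      proof (cases "?p - i \<le> t")
        case True
        define u where "u = t - (?p - i)"
        have r1: "row i = (if u < ?m i then 1 else 0)" using True by (simp add: row_def u_def)
        have r2: "row (i - 1) = (if 1 \<le> u \<and> u \<le> ?m i then 1 else 0)"
          using True eq pi by (auto simp: row_def u_def)
        have s: "s_seq ms i u = (if ln i then (if u = 0 then 1 else if u < ?m i then 2 else if u = ?m i then 1 else 0) else 0)"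
          using eq by (simp add: s_seq_def Let_def ln_def)
        show ?thesis using True mpos i2 eq
          unfolding A_def B_def r1 r2 s u_def[symmetric] by auto
      next
        case False
        then show ?thesis using pi by (simp add: A_def B_def row_def)
      qed
    qed
  qed
  have "std_O_seq ms t = (\<Sum>i = 1..?p. A i + B i)"
    unfolding std_O_seq_def by (intro sum.cong refl) (simp add: contrib)
  also have "\<dots> = (\<Sum>i = 1..?p. A i) + (\<Sum>i = 1..?p. B i)" by (rule sum.distrib)
  also have "(\<Sum>i = 1..?p. B i) = (\<Sum>j = 1..?p - 1. if ln j then 0 else row j)"
  proof -
    have "(\<Sum>i = 1..?p. B i) = B 1 + (\<Sum>i = Suc 1..?p. B i)" using p1 by (rule sum.atLeast_Suc_atMost)
    also have "B 1 = 0" by (simp add: B_def)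
    also have "(\<Sum>i = Suc 1..?p. B i) = (\<Sum>i = Suc 1..Suc (?p - 1). B i)"
    proof -
      have "Suc (?p - 1) = ?p" using p1 by simp
      then show ?thesis by (simp only:)
    qed
    also have "\<dots> = (\<Sum>j = 1..?p - 1. B (Suc j))" by (rule sum.shift_bounds_cl_Suc_ivl)
    also have "\<dots> = (\<Sum>j = 1..?p - 1. if ln j then 0 else row j)"
    proof (intro sum.cong refl)
      fix j assume j: "j \<in> {1..?p - 1}"
      have mle: "?m j \<le> ?m (Suc j)" using mval_mono[OF sor, of j "Suc j"] j by auto
      have "(ln (Suc j) \<and> ?m j = ?m (Suc j)) \<longleftrightarrow> \<not> ln j"
      proof
        assume "ln (Suc j) \<and> ?m j = ?m (Suc j)" then show "\<not> ln j" using j by (auto simp: ln_def)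
      next
        assume nl: "\<not> ln j"
        then have eq: "?m j = ?m (Suc j)" using mle by (auto simp: ln_def)
        have "ln (Suc j)"
        proof (cases "Suc j = ?p")
          case False
          then have "(j - 1) + 2 < ?p" using j by auto
          moreover have "ms ! (j - 1) = ms ! (j - 1 + 1)" using eq j by (simp add: mval_def)
          ultimately have "ms ! (j - 1 + 1) < ms ! (j - 1 + 2)" by (rule pseudo)
          then show ?thesis using j by (simp add: ln_def mval_def)
        qed (simp add: ln_def)
        then show "ln (Suc j) \<and> ?m j = ?m (Suc j)" using eq by simp
      qed
      then show "B (Suc j) = (if ln j then 0 else row j)" using j by (auto simp: B_def)
    qed
    finally show ?thesis by simp
  qed
  also have "(\<Sum>j = 1..?p - 1. if ln j then 0 else row j) = (\<Sum>j = 1..?p. if ln j then 0 else row j)"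
  proof -
    have eq: "{1..?p} = insert ?p {1..?p - 1}" using p1 by auto
    show ?thesis unfolding eq by (subst sum.insert) (auto simp: ln_def)
  qed
  also have "(\<Sum>i = 1..?p. A i) + (\<Sum>j = 1..?p. if ln j then 0 else row j) = (\<Sum>i = 1..?p. row i)"
    by (simp add: A_def sum.distrib[symmetric] if_distrib cong: if_cong)
  also have "\<dots> = int (card (rowset ms t))"
    unfolding rowset_def by (subst int_card_filter) (simp_all add: row_def)
  finally show ?thesis .
qed

lemma regularity_eq:
  assumes sor: "sorted ms" and pos: "\<forall>x\<in>set ms. 0 < x" and ne: "ms \<noteq> []"
  shows "regularity (ideal_of_points (std_config ms :: 'a::field_char_0 pt set))
       = Max ((\<lambda>i. length ms - i + mval ms i) ` {1..length ms})"
proof -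
  let ?p = "length ms"
  let ?M = "Max ((\<lambda>i. length ms - i + mval ms i) ` {1..length ms})"
  have fin: "finite ((\<lambda>i. length ms - i + mval ms i) ` {1..length ms})" by simp
  have le: "?p - i + mval ms i \<le> ?M" if "i \<in> {1..?p}" for i
    using fin that by (intro Max_ge) auto
  have p1: "1 \<le> ?p" using ne by (cases ms) auto
  obtain i0 where i0: "i0 \<in> {1..?p}" "?M = ?p - i0 + mval ms i0"
    using Max_in[OF fin] p1 by fastforce
  have empty: "rowset ms ?M = {}"
  proof (rule ccontr)
    assume "rowset ms ?M \<noteq> {}"
    then obtain i where i: "i \<in> {1..?p}" "?p - i \<le> ?M" "?M - (?p - i) < mval ms i"
      unfolding rowset_def by blast
    have "?p - i + mval ms i \<le> ?M" using le[OF i(1)] .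
    then show False using i(3) by linarith
  qed
  have nonempty: "rowset ms t \<noteq> {}" if t: "t < ?M" for t
  proof (cases "?p - i0 \<le> t")
    case True
    then have "i0 \<in> rowset ms t" using i0 t by (auto simp: rowset_def)
    then show ?thesis by blast
  next
    case False
    then have "?p - t \<in> rowset ms t"
      using mval_pos[OF pos, of "?p - t"] by (auto simp: rowset_def)
    then show ?thesis by blast
  qed
  have dh: "delta_hilb (ideal_of_points (std_config ms :: 'a pt set)) t = 0 \<longleftrightarrow> rowset ms t = {}" for t
    unfolding delta_hilb_rowset[OF sor] by (simp add: rowset_def)
  show ?thesis
    unfolding regularity_def
  proof (rule Least_equality)
    show "delta_hilb (ideal_of_points (std_config ms :: 'a pt set)) ?M = 0" using dh empty by simp
    fix y assume "delta_hilb (ideal_of_points (std_config ms :: 'a pt set)) y = 0"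
    then show "?M \<le> y" using dh nonempty not_le by blast
  qed
qed

definition Sfx :: "nat list \<Rightarrow> nat \<Rightarrow> int" where
  "Sfx d i = (\<Sum>k\<in>{i..<length d}. 1 - int (d ! k))"

definition guarded :: "nat list \<Rightarrow> nat \<Rightarrow> bool" where
  "guarded d i \<longleftrightarrow> (\<forall>b. i \<le> b \<and> b < length d \<and> d ! b = 0 \<longrightarrow> (\<exists>c. i \<le> c \<and> c < b \<and> 1 < d ! c))"

definition ezo_from :: "nat list \<Rightarrow> nat \<Rightarrow> bool" where
  "ezo_from d i \<longleftrightarrow> (\<exists>k. i \<le> k \<and> k < length d \<and> d ! k = 0 \<and> (\<forall>j. k < j \<and> j < length d \<longrightarrow> d ! j = 1))"

definition allones :: "nat list \<Rightarrow> nat \<Rightarrow> bool" where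
  "allones d i \<longleftrightarrow> (\<forall>j. i \<le> j \<and> j < length d \<longrightarrow> d ! j = 1)"

lemma Sfx_step: "i < length d \<Longrightarrow> Sfx d i = (1 - int (d ! i)) + Sfx d (Suc i)"
  unfolding Sfx_def by (rule sum.atLeast_Suc_lessThan)

lemma Sfx_end: "Sfx d (length d) = 0"
  by (simp add: Sfx_def)

lemma guarded_next_zero:
  assumes "zeros_separated d" "i < length d" "d ! i = 0"
  shows "guarded d (Suc i)"
  unfolding guarded_def
proof (intro allI impI)
  fix b assume b: "Suc i \<le> b \<and> b < length d \<and> d ! b = 0"
  then have "i < b \<and> b < length d \<and> d ! i = 0 \<and> d ! b = 0" using assms by simp
  then obtain c where "i < c" "c < b" "1 < d ! c" using assms(1) unfolding zeros_separated_def by blast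
  then show "\<exists>c. Suc i \<le> c \<and> c < b \<and> 1 < d ! c" by (intro exI[of _ c]) simp
qed

lemma guarded_step:
  assumes "guarded d i" "i < length d" "d ! i = 1"
  shows "guarded d (Suc i)"
  unfolding guarded_def
proof (intro allI impI)
  fix b assume b: "Suc i \<le> b \<and> b < length d \<and> d ! b = 0"
  then have "i \<le> b \<and> b < length d \<and> d ! b = 0" by simp
  then obtain c where c: "i \<le> c" "c < b" "1 < d ! c" using assms(1) unfolding guarded_def by blast
  then have "c \<noteq> i" using assms(3) by auto
  then show "\<exists>c. Suc i \<le> c \<and> c < b \<and> 1 < d ! c" using c by (intro exI[of _ c]) simp
qed

lemma guarded_nonzero:
  assumes "guarded d i" "i < length d" shows "d ! i \<noteq> 0"
proof
  assume "d ! i = 0"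
  then obtain c where "i \<le> c" "c < i" using assms unfolding guarded_def by blast
  then show False by simp
qed

lemma Sfx_Q:
  assumes zs: "zeros_separated d" and i: "i \<le> length d"
  shows "Sfx d i \<le> 1 \<and> (guarded d i \<longrightarrow> Sfx d i \<le> 0)"
  using i
proof (induction i rule: inc_induct)
  case base
  then show ?case by (simp add: Sfx_end)
next
  case (step n)
  note st = Sfx_step[OF step.hyps(2)]
  show ?case
  proof (cases "d ! n = 0")
    case True
    then have "guarded d (Suc n)" using guarded_next_zero[OF zs step.hyps(2)] by simp
    then have "Sfx d (Suc n) \<le> 0" using step.IH by blast
    moreover have "\<not> guarded d n" using guarded_nonzero step.hyps(2) True by blast
    ultimately show ?thesis using st True by simp
  next
    case False
    have a: "Sfx d n \<le> 1" using st False step.IH by simp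
    have "Sfx d n \<le> 0" if g: "guarded d n"
    proof (cases "d ! n = 1")
      case True
      then have "guarded d (Suc n)" using guarded_step[OF g step.hyps(2)] by simp
      then show ?thesis using step.IH st True by simp
    next
      case False
      then have "1 < d ! n" using \<open>d ! n \<noteq> 0\<close> by simp
      then show ?thesis using st step.IH by simp
    qed
    then show ?thesis using a by blast
  qed
qed

lemma Sfx_R:
  assumes zs: "zeros_separated d" and i: "i \<le> length d"
  shows "(1 \<le> Sfx d i \<longrightarrow> ezo_from d i) \<and> (guarded d i \<and> 0 \<le> Sfx d i \<longrightarrow> allones d i \<or> ezo_from d i)"
  using i
proof (induction i rule: inc_induct)
  case base
  then show ?case by (simp add: Sfx_end allones_def)
next
  case (step n)
  note st = Sfx_step[OF step.hyps(2)]
  have ezo_mono: "ezo_from d (Suc n) \<Longrightarrow> ezo_from d n" unfolding ezo_from_def using Suc_leD by blast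
  have P3: "ezo_from d n" if s1: "1 \<le> Sfx d n"
  proof (cases "d ! n = 0")
    case True
    then have g: "guarded d (Suc n)" using guarded_next_zero[OF zs step.hyps(2)] by simp
    have "0 \<le> Sfx d (Suc n)" using s1 st True by simp
    then have "allones d (Suc n) \<or> ezo_from d (Suc n)" using step.IH g by blast
    then show ?thesis
    proof
      assume "allones d (Suc n)"
      then show ?thesis unfolding ezo_from_def allones_def using True step.hyps(2)
        by (intro exI[of _ n]) auto
    qed (rule ezo_mono)
  next
    case False
    then have "1 \<le> Sfx d (Suc n)" using s1 st by simp
    then show ?thesis using step.IH ezo_mono by blast
  qed
  have P4: "allones d n \<or> ezo_from d n" if g: "guarded d n" and s0: "0 \<le> Sfx d n"
  proof -
    have nz: "d ! n \<noteq> 0" using guarded_nonzero[OF g step.hyps(2)] .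
    show ?thesis
    proof (cases "d ! n = 1")
      case True
      then have "guarded d (Suc n)" using guarded_step[OF g step.hyps(2)] by simp
      moreover have "0 \<le> Sfx d (Suc n)" using s0 st True by simp
      ultimately have "allones d (Suc n) \<or> ezo_from d (Suc n)" using step.IH by blast
      then show ?thesis
      proof
        assume "allones d (Suc n)"
        then have "allones d n" using True unfolding allones_def by (metis le_antisym not_less_eq_eq)
        then show ?thesis by blast
      qed (use ezo_mono in blast)
    next
      case False
      then have "1 \<le> Sfx d (Suc n)" using s0 st nz by simp
      then show ?thesis using step.IH ezo_mono by blast
    qed
  qed
  show ?case using P3 P4 by blast
qed

lemma delta_type_nth: "k < length ms \<Longrightarrow> delta_type ms ! k = mval ms (Suc k) - mval ms k"
  by (simp add: delta_type_def)

lemma length_delta_type[simp]: "length (delta_type ms) = length ms"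
  by (simp add: delta_type_def)

lemma Sfx_delta:
  assumes sor: "sorted ms" and i: "i \<le> length ms"
  shows "int (length ms - i + mval ms i) = int (mval ms (length ms)) + Sfx (delta_type ms) i"
proof -
  let ?p = "length ms"
  have "Sfx (delta_type ms) i = (\<Sum>k=i..<?p. 1 - (int (mval ms (Suc k)) - int (mval ms k)))"
    unfolding Sfx_def length_delta_type
  proof (intro sum.cong refl)
    fix k assume k: "k \<in> {i..<?p}"
    have "mval ms k \<le> mval ms (Suc k)" using mval_mono[OF sor, of k "Suc k"] k by auto
    then show "1 - int (delta_type ms ! k) = 1 - (int (mval ms (Suc k)) - int (mval ms k))"
      using k by (simp add: delta_type_nth of_nat_diff)
  qed
  also have "\<dots> = (\<Sum>k=i..<?p. 1) - (\<Sum>k=i..<?p. int (mval ms (Suc k)) - int (mval ms k))"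
    by (rule sum_subtractf)
  also have "(\<Sum>k=i..<?p. int (mval ms (Suc k)) - int (mval ms k)) = int (mval ms ?p) - int (mval ms i)"
    using i by (rule sum_Suc_diff')
  finally show ?thesis using i by simp
qed

lemma part_iii_Max:
  assumes ptv: "pseudo_type_vector ms" and zs: "zeros_separated (delta_type ms)"
  shows "Max ((\<lambda>i. length ms - i + mval ms i) ` {1..length ms})
       = (if ends_zero_ones (delta_type ms) then last ms + 1 else last ms)"
proof -
  let ?p = "length ms" and ?d = "delta_type ms"
  let ?A = "(\<lambda>i. length ms - i + mval ms i) ` {1..length ms}"
  have pos: "\<forall>x\<in>set ms. 0 < x" and sor: "sorted ms" and ne: "ms \<noteq> []"
    using ptv by (auto simp: pseudo_type_vector_def)
  have p1: "1 \<le> ?p" using ne by (cases ms) auto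
  have last: "last ms = mval ms ?p" using ne p1 by (simp add: last_conv_nth mval_def)
  have fin: "finite ?A" by simp
  have d0: "?d ! 0 \<noteq> 0" using delta_type_nth[of 0 ms] p1 mval_pos[OF pos, of 1] ne by (simp add: mval_def)
  have ezo_iff: "ends_zero_ones ?d \<longleftrightarrow> ezo_from ?d 0"
    by (simp add: ends_zero_ones_def ezo_from_def)
  show ?thesis
  proof (cases "ends_zero_ones ?d")
    case True
    then obtain k where k: "k < ?p" "?d ! k = 0" "\<And>j. k < j \<Longrightarrow> j < ?p \<Longrightarrow> ?d ! j = 1"
      unfolding ends_zero_ones_def by auto
    have k1: "1 \<le> k" using k d0 by (cases k) auto
    have "Sfx ?d (Suc k) = 0" unfolding Sfx_def using k(3) by (intro sum.neutral) auto
    then have "Sfx ?d k = 1" using Sfx_step[of k ?d] k by simp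
    then have "int (?p - k + mval ms k) = int (mval ms ?p) + 1" using Sfx_delta[OF sor, of k] k by simp
    then have vk: "?p - k + mval ms k = mval ms ?p + 1" by simp
    have "Max ?A = mval ms ?p + 1"
    proof (rule Max_eqI[OF fin])
      fix y assume "y \<in> ?A"
      then obtain i where i: "i \<in> {1..?p}" "y = ?p - i + mval ms i" by blast
      have "Sfx ?d i \<le> 1" using Sfx_Q[OF zs, of i] i by simp
      then have "int y \<le> int (mval ms ?p + 1)" using Sfx_delta[OF sor, of i] i by simp
      then show "y \<le> mval ms ?p + 1" by simp
    next
      show "mval ms ?p + 1 \<in> ?A" using vk k k1 by (intro image_eqI[of _ _ k]) auto
    qed
    then show ?thesis using True last by simp
  next
    case False
    have "Max ?A = mval ms ?p"
    proof (rule Max_eqI[OF fin])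
      fix y assume "y \<in> ?A"
      then obtain i where i: "i \<in> {1..?p}" "y = ?p - i + mval ms i" by blast
      have "Sfx ?d i \<le> 0"
      proof (rule ccontr)
        assume "\<not> Sfx ?d i \<le> 0"
        then have "ezo_from ?d i" using Sfx_R[OF zs, of i] i by simp
        then have "ezo_from ?d 0" unfolding ezo_from_def by auto
        then show False using False ezo_iff by simp
      qed
      then have "int y \<le> int (mval ms ?p)" using Sfx_delta[OF sor, of i] i by simp
      then show "y \<le> mval ms ?p" by simp
    next
      show "mval ms ?p \<in> ?A" using p1 by (intro image_eqI[of _ _ ?p]) auto
    qed
    then show ?thesis using False last by simp
  qed
qed

definition exms :: "nat \<Rightarrow> nat list" where
  "exms n = map (\<lambda>i. i div 2 + 1) [0..<2 * n]"

lemma exms_nth: "i < 2 * n \<Longrightarrow> exms n ! i = i div 2 + 1"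
  by (simp add: exms_def)

lemma exms_len[simp]: "length (exms n) = 2 * n"
  by (simp add: exms_def)

lemma exms_ptv: assumes "1 \<le> n" shows "pseudo_type_vector (exms n)"
proof -
  have "exms n \<noteq> []" using assms by (simp add: exms_def)
  moreover have "\<forall>x\<in>set (exms n). 0 < x" by (simp add: exms_def)
  moreover have "sorted (exms n)"
    unfolding sorted_iff_nth_mono by (auto simp: exms_nth intro: div_le_mono)
  moreover have "\<forall>i. i + 2 < length (exms n) \<longrightarrow> exms n ! i = exms n ! (i+1) \<longrightarrow> exms n ! (i+1) < exms n ! (i+2)"
    by (auto simp: exms_nth)
  ultimately show ?thesis by (simp add: pseudo_type_vector_def)
qed

lemma exms_not_zs: assumes "2 \<le> n" shows "\<not> zeros_separated (delta_type (exms n))"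
proof -
  let ?d = "delta_type (exms n)"
  have l: "3 < 2 * n" using assms by simp
  have e: "exms n ! 0 = 1" "exms n ! 1 = 1" "exms n ! 2 = 2" "exms n ! 3 = 2"
    using l by (simp_all add: exms_nth)
  have d1: "?d ! 1 = 0" using l e by (simp add: delta_type_nth mval_def)
  have d3: "?d ! 3 = 0" using l e by (simp add: delta_type_nth mval_def)
  have d2: "?d ! 2 = 1" using l e by (simp add: delta_type_nth mval_def)
  have "\<not> (\<exists>c. 1 < c \<and> c < 3 \<and> 1 < ?d ! c)"
  proof
    assume "\<exists>c. 1 < c \<and> c < 3 \<and> 1 < ?d ! c"
    then obtain c where "1 < c" "c < 3" "1 < ?d ! c" by blast
    then have "c = 2" by simp
    then show False using d2 \<open>1 < ?d ! c\<close> by simp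
  qed
  then show ?thesis unfolding zeros_separated_def using d1 d3 l
    by (intro notI) (drule spec[of _ 1], drule spec[of _ 3], auto)
qed

lemma part_iv:
  "\<exists>ms'. pseudo_type_vector ms' \<and> \<not> zeros_separated (delta_type ms') \<and>
         last ms' + N \<le> regularity (ideal_of_points (std_config ms' :: 'a::field_char_0 pt set))"
proof (intro exI conjI)
  let ?n = "N + 2"
  let ?ms = "exms ?n"
  show ptv: "pseudo_type_vector ?ms" by (rule exms_ptv) simp
  show "\<not> zeros_separated (delta_type ?ms)" by (rule exms_not_zs) simp
  have pos: "\<forall>x\<in>set ?ms. 0 < x" and sor: "sorted ?ms" and ne: "?ms \<noteq> []"
    using ptv by (auto simp: pseudo_type_vector_def)
  have reg: "regularity (ideal_of_points (std_config ?ms :: 'a pt set))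
       = Max ((\<lambda>i. length ?ms - i + mval ?ms i) ` {1..length ?ms})"
    by (rule regularity_eq[OF sor pos ne])
  have "length ?ms - 1 + mval ?ms 1 \<in> (\<lambda>i. length ?ms - i + mval ?ms i) ` {1..length ?ms}"
    by (rule image_eqI[of _ _ 1]) auto
  then have "length ?ms - 1 + mval ?ms 1 \<le> Max ((\<lambda>i. length ?ms - i + mval ?ms i) ` {1..length ?ms})"
    by (intro Max_ge) auto
  moreover have "mval ?ms 1 = 1" by (simp add: mval_def exms_nth)
  moreover have "last ?ms = ?n"
  proof -
    have "last ?ms = ?ms ! (2 * ?n - 1)" using ne by (simp add: last_conv_nth)
    also have "\<dots> = (2 * ?n - 1) div 2 + 1" by (rule exms_nth) simp
    finally show ?thesis by simp
  qed
  ultimately show "last ?ms + N \<le> regularity (ideal_of_points (std_config ?ms :: 'a pt set))"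
    using reg by simp
qed

theorem proposition3p6:
  fixes ms :: "nat list"
  assumes "pseudo_type_vector ms"
  shows "obtainable_by_bdl (ideal_of_points (std_config ms :: 'a::field_char_0 pt set))
    \<and> (\<forall>t. delta_hilb (ideal_of_points (std_config ms :: 'a pt set)) t = std_O_seq ms t)
    \<and> (zeros_separated (delta_type ms) \<longrightarrow>
         regularity (ideal_of_points (std_config ms :: 'a pt set)) =
           (if ends_zero_ones (delta_type ms) then last ms + 1 else last ms))
    \<and> (\<forall>N::nat. \<exists>ms'. pseudo_type_vector ms' \<and> \<not> zeros_separated (delta_type ms') \<and>
         last ms' + N \<le> regularity (ideal_of_points (std_config ms' :: 'a pt set)))"
proof (intro conjI allI impI)
  have pos: "\<forall>x\<in>set ms. 0 < x" and sor: "sorted ms" and ne: "ms \<noteq> []"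
    using assms by (auto simp: pseudo_type_vector_def)
  show "obtainable_by_bdl (ideal_of_points (std_config ms :: 'a::field_char_0 pt set))"
    by (rule part_i[OF assms])
  fix t
  show "delta_hilb (ideal_of_points (std_config ms :: 'a pt set)) t = std_O_seq ms t"
    using delta_hilb_rowset[OF sor] O_seq_rowset[OF assms] by simp
next
  have pos: "\<forall>x\<in>set ms. 0 < x" and sor: "sorted ms" and ne: "ms \<noteq> []"
    using assms by (auto simp: pseudo_type_vector_def)
  assume "zeros_separated (delta_type ms)"
  then show "regularity (ideal_of_points (std_config ms :: 'a pt set)) =
           (if ends_zero_ones (delta_type ms) then last ms + 1 else last ms)"
    using regularity_eq[OF sor pos ne] part_iii_Max[OF assms] by simp
next
  fix N :: nat
  show "\<exists>ms'. pseudo_type_vector ms' \<and> \<not> zeros_separated (delta_type ms') \<and>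
         last ms' + N \<le> regularity (ideal_of_points (std_config ms' :: 'a pt set))"
    by (rule part_iv)
qed

end
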